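(* Let $H\in(0,1)$, $\delta\in(0,H)$, $\rho>0$, let $B^H$ be a fractional Brownian motion on $[0,1]$ with Hurst index $H$, let $n\ge1$, and suppose $\mathbf{B}^H_n$ satisfies the BCE condition. Then for all $m\ge1$, $1\le k\le 2^{n+m-1}$ and $\theta>0$, $$\Xi^{(m,k)}_n(\theta)\le\exp\Bigl\{\tfrac12\bigl(\rho\,\ell_{n+m}\,\theta+\theta^2\,2^{-2(n+m)H}\bigr)\Bigr\}.$$
   Context: A fractional Brownian motion with Hurst index $H$ is a centered Gaussian process with $B^H(0)=0$ and covariance $\mathbb{E}[B^H(s)B^H(t)]=\tfrac12(|s|^{2H}+|t|^{2H}-|s-t|^{2H})$. $t^n_i=i/2^n$, $\ell_k=2^{-(H-\delta)k}$, $\mathbf{B}^H_n=(B^H(t^n_0),\dots,B^H(t^n_{2^n}))$, $\boldsymbol\alpha_n(m,k)=(B^H(t^{n+m}_{2k-2}),B^H(t^{n+m}_{2k-1}),B^H(t^{n+m}_{2k}))^\top$, $\boldsymbol\beta=(1/2,-1,1/2)^\top$, $\mu_n(m,k)=\boldsymbol\beta^\top\mathbb{E}[\boldsymbol\alpha_n(m,k)\mid\mathbf{B}^H_n]$, $\Xi^{(m,k)}_n(\theta)=\mathbb{E}[\exp\{\theta\boldsymbol\beta^\top\boldsymbol\alpha_n(m,k)\}\mid\mathbf{B}^H_n]$. BCE condition: $|\mu_n(m,k)|\le\tfrac{\rho}{2}\ell_{n+m}$ for all $m\ge1$, $1\le k\le2^{n+m-1}$. *)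

theory Defs
  imports "HOL-Probability.Probability" "HOL-Probability.Conditional_Expectation"
begin

definition gaussian_rv :: "'a measure \<Rightarrow> ('a \<Rightarrow> real) \<Rightarrow> bool" where
  "gaussian_rv M X \<longleftrightarrow> X \<in> borel_measurable M \<and>
     ((\<exists>c. AE \<omega> in M. X \<omega> = c) \<or>
      (\<exists>\<mu> \<sigma>. \<sigma> > 0 \<and> distributed M lborel X (normal_density \<mu> \<sigma>)))"

definition fbm_on_unit :: "'a measure \<Rightarrow> real \<Rightarrow> (real \<Rightarrow> 'a \<Rightarrow> real) \<Rightarrow> bool" where
  "fbm_on_unit M H B \<longleftrightarrow> prob_space M \<and>
     (\<forall>t\<in>{0..1}. B t \<in> borel_measurable M) \<and>
     (AE \<omega> in M. B 0 \<omega> = 0) \<and>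
     (\<forall>S c. finite S \<and> S \<subseteq> {0..1} \<longrightarrow> gaussian_rv M (\<lambda>\<omega>. \<Sum>t\<in>S. c t * B t \<omega>)) \<and>
     (\<forall>t\<in>{0..1}. integrable M (B t) \<and> integral\<^sup>L M (B t) = 0) \<and>
     (\<forall>s\<in>{0..1}. \<forall>t\<in>{0..1}. integrable M (\<lambda>\<omega>. B s \<omega> * B t \<omega>) \<and>
        integral\<^sup>L M (\<lambda>\<omega>. B s \<omega> * B t \<omega>) =
          (\<bar>s\<bar> powr (2*H) + \<bar>t\<bar> powr (2*H) - \<bar>s - t\<bar> powr (2*H)) / 2)"

definition dyadic :: "nat \<Rightarrow> nat \<Rightarrow> real" where
  "dyadic n i = real i / 2 ^ n"

definition ell :: "real \<Rightarrow> real \<Rightarrow> nat \<Rightarrow> real" where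
  "ell H \<delta> k = 2 powr (- (H - \<delta>) * real k)"

definition gen_sigma :: "'a measure \<Rightarrow> (real \<Rightarrow> 'a \<Rightarrow> real) \<Rightarrow> nat \<Rightarrow> 'a measure" where
  "gen_sigma M B n = sigma (space M)
     {B (dyadic n i) -` A \<inter> space M | i A. i \<le> 2 ^ n \<and> A \<in> sets borel}"

definition mu_cond :: "'a measure \<Rightarrow> (real \<Rightarrow> 'a \<Rightarrow> real) \<Rightarrow> nat \<Rightarrow> nat \<Rightarrow> nat \<Rightarrow> 'a \<Rightarrow> real" where
  "mu_cond M B n m k \<omega> =
     1/2 * real_cond_exp M (gen_sigma M B n) (B (dyadic (n+m) (2*k-2))) \<omega>
     - real_cond_exp M (gen_sigma M B n) (B (dyadic (n+m) (2*k-1))) \<omega>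
     + 1/2 * real_cond_exp M (gen_sigma M B n) (B (dyadic (n+m) (2*k))) \<omega>"

definition Xi :: "'a measure \<Rightarrow> (real \<Rightarrow> 'a \<Rightarrow> real) \<Rightarrow> nat \<Rightarrow> nat \<Rightarrow> nat \<Rightarrow> real \<Rightarrow> 'a \<Rightarrow> real" where
  "Xi M B n m k \<theta> \<omega> = real_cond_exp M (gen_sigma M B n)
     (\<lambda>\<omega>. exp (\<theta> * (1/2 * B (dyadic (n+m) (2*k-2)) \<omega> - B (dyadic (n+m) (2*k-1)) \<omega>
                      + 1/2 * B (dyadic (n+m) (2*k)) \<omega>))) \<omega>"

definition BCE :: "'a measure \<Rightarrow> (real \<Rightarrow> 'a \<Rightarrow> real) \<Rightarrow> real \<Rightarrow> real \<Rightarrow> real \<Rightarrow> nat \<Rightarrow> 'a \<Rightarrow> bool" where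
  "BCE M B H \<delta> \<rho> n \<omega> \<longleftrightarrow>
     (\<forall>m k. 1 \<le> m \<and> 1 \<le> k \<and> k \<le> 2 ^ (n+m-1) \<longrightarrow>
        \<bar>mu_cond M B n m k \<omega>\<bar> \<le> \<rho> / 2 * ell H \<delta> (n+m))"

end

theory Submission
  imports Defs
begin


lemma powser_coeffs_zero:
  fixes a :: "nat \<Rightarrow> real"
  assumes S: "\<And>x. (\<lambda>n. a n * x^n) sums 0"
  shows "a k = 0"
proof (induction k rule: less_induct)
  case (less k)
  have *: "(\<lambda>n. a (n+k) * x^n) sums 0" if "x \<noteq> 0" for x
  proof -
    have "(\<Sum>i<k. a i * x^i) = 0" using less by simp
    then have "(\<lambda>n. a (n + k) * x^(n+k)) sums 0" using S[of x] sums_iff_shift[of "\<lambda>n. a n * x^n" k 0] by simp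
    then have "(\<lambda>n. a (n + k) * x^(n+k) * inverse (x^k)) sums (0 * inverse (x^k))" by (rule sums_mult2)
    moreover have "a (n + k) * x^(n+k) * inverse (x^k) = a (n+k) * x^n" for n
      using that by (simp add: power_add)
    ultimately show ?thesis by simp
  qed
  then have "((\<lambda>x::real. 0::real) \<longlongrightarrow> a k) (at 0)"
    using powser_limit_0_strong[of 1 "\<lambda>n. a (n+k)" "\<lambda>_. 0"] by simp
  then show "a k = 0" using LIM_unique[OF _ tendsto_const[of "0::real" "at (0::real)"]] by simp
qed


lemma pow_fact_le_exp:
  fixes y :: real assumes "0 \<le> y"
  shows "y^k / fact k \<le> exp y"
proof -
  have "(\<Sum>n\<in>{k}. y^n /\<^sub>R fact n) \<le> (\<Sum>n. y^n /\<^sub>R fact n)"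
  proof (rule sum_le_suminf)
    show "summable (\<lambda>n. y^n /\<^sub>R fact n)" using exp_converges[of y] by (rule sums_summable)
    show "finite {k}" by simp
    show "0 \<le> y^n /\<^sub>R fact n" for n using assms by simp
  qed
  moreover have "(\<Sum>n. y^n /\<^sub>R fact n) = exp y" using exp_converges[of y] by (simp add: sums_iff)
  ultimately show ?thesis by (simp add: divide_inverse mult.commute)
qed

lemma partial_exp_le_exp:
  fixes y :: real assumes "0 \<le> y"
  shows "(\<Sum>k\<le>n. y^k / fact k) \<le> exp y"
proof -
  have "(\<Sum>k\<le>n. y^k /\<^sub>R fact k) \<le> (\<Sum>k. y^k /\<^sub>R fact k)"
  proof (rule sum_le_suminf)
    show "summable (\<lambda>n. y^n /\<^sub>R fact n)" using exp_converges[of y] by (rule sums_summable)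
    show "finite {..n}" by simp
    show "0 \<le> y^k /\<^sub>R fact k" for k using assms by simp
  qed
  moreover have "(\<Sum>n. y^n /\<^sub>R fact n) = exp y" using exp_converges[of y] by (simp add: sums_iff)
  ultimately show ?thesis by (simp add: divide_inverse mult.commute)
qed

lemma abs_pow_le_exp2:
  fixes x :: real
  shows "\<bar>x\<bar>^k \<le> fact k * (exp x + exp (- x))"
proof -
  have "\<bar>x\<bar>^k / fact k \<le> exp \<bar>x\<bar>" by (rule pow_fact_le_exp) simp
  moreover have "exp \<bar>x\<bar> \<le> exp x + exp (-x)"
    by (cases "x \<ge> 0") (simp_all add: add_increasing add_increasing2)
  ultimately have "\<bar>x\<bar>^k / fact k \<le> exp x + exp (-x)" by linarith
  then show ?thesis by (simp add: divide_le_eq mult.commute)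
qed

lemma mom_integrable:
  fixes M :: "real measure"
  assumes sb: "sets M = sets borel" and E: "\<And>s. integrable M (\<lambda>x. exp (s*x))"
  shows "integrable M (\<lambda>x. x^k)"
proof (rule Bochner_Integration.integrable_bound)
  have "integrable M (\<lambda>x. exp x + exp (-x))" using E[of 1] E[of "-1"] by simp
  then show "integrable M (\<lambda>x. fact k * (exp x + exp (- x)))" by (rule integrable_mult_right)
  show "(\<lambda>x. x^k) \<in> borel_measurable M" unfolding measurable_cong_sets[OF sb refl] by measurable
  show "AE x in M. norm (x ^ k) \<le> norm (fact k * (exp x + exp (- x)))"
  proof (rule AE_I2)
    fix x :: real
    have "norm (x^k) = \<bar>x\<bar>^k" by (simp add: power_abs)
    also have "\<dots> \<le> fact k * (exp x + exp (- x))" by (rule abs_pow_le_exp2)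
    also have "\<dots> = norm (fact k * (exp x + exp (- x)))"
      by (simp add: abs_mult add_nonneg_nonneg)
    finally show "norm (x ^ k) \<le> norm (fact k * (exp x + exp (- x)))" .
  qed
qed

lemma mgf_series:
  fixes M :: "real measure" and z :: complex
  assumes sb: "sets M = sets borel" and E: "\<And>s. integrable M (\<lambda>x. exp (s*x))"
  shows "(\<lambda>n. \<Sum>k\<le>n. z^k / fact k * complex_of_real (\<integral>x. x^k \<partial>M)) \<longlonglongrightarrow> (CLINT x|M. exp (z * complex_of_real x))"
proof -
  define s where "s n x = (\<Sum>k\<le>n. (z * complex_of_real x)^k / fact k)" for n x
  define w where "w x = exp (cmod z * x) + exp (- cmod z * x)" for x
  have ms: "s n \<in> borel_measurable M" for n
    unfolding measurable_cong_sets[OF sb refl] s_def by measurable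
  have mf: "(\<lambda>x. exp (z * complex_of_real x)) \<in> borel_measurable M"
    unfolding measurable_cong_sets[OF sb refl] by measurable
  have iw: "integrable M w" unfolding w_def using E[of "cmod z"] E[of "- cmod z"] by simp
  have lim: "AE x in M. (\<lambda>n. s n x) \<longlonglongrightarrow> exp (z * complex_of_real x)"
  proof (rule AE_I2)
    fix x
    have "(\<lambda>n. (z * complex_of_real x)^n /\<^sub>R fact n) sums exp (z * complex_of_real x)"
      by (rule exp_converges)
    then show "(\<lambda>n. s n x) \<longlonglongrightarrow> exp (z * complex_of_real x)"
      unfolding sums_def_le s_def by (simp add: scaleR_conv_of_real divide_inverse mult.commute)
  qed
  have bound: "AE x in M. norm (s n x) \<le> w x" for n
  proof (rule AE_I2)
    fix x
    have "norm (s n x) \<le> (\<Sum>k\<le>n. norm ((z * complex_of_real x)^k / fact k))"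
      unfolding s_def by (rule norm_sum)
    also have "\<dots> = (\<Sum>k\<le>n. (cmod z * \<bar>x\<bar>)^k / fact k)"
      by (simp add: norm_divide norm_mult norm_power)
    also have "\<dots> \<le> exp (cmod z * \<bar>x\<bar>)" by (rule partial_exp_le_exp) simp
    also have "\<dots> \<le> w x" unfolding w_def
      by (cases "x \<ge> 0") (simp_all add: add_increasing add_increasing2)
    finally show "norm (s n x) \<le> w x" .
  qed
  have "(\<lambda>n. integral\<^sup>L M (s n)) \<longlonglongrightarrow> (CLINT x|M. exp (z * complex_of_real x))"
    by (rule integral_dominated_convergence[OF mf ms iw lim bound])
  moreover have "integral\<^sup>L M (s n) = (\<Sum>k\<le>n. z^k / fact k * complex_of_real (\<integral>x. x^k \<partial>M))" for n
  proof -
    have eq: "s n x = (\<Sum>k\<le>n. z^k / fact k * complex_of_real (x^k))" for x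
      unfolding s_def by (simp add: power_mult_distrib)
    have ig: "integrable M (\<lambda>x. z^k / fact k * complex_of_real (x^k))" for k
      by (intro integrable_mult_right integrable_of_real mom_integrable[OF sb E])
    have "integral\<^sup>L M (s n) = (\<Sum>k\<le>n. integral\<^sup>L M (\<lambda>x. z^k / fact k * complex_of_real (x^k)))"
      unfolding eq by (rule Bochner_Integration.integral_sum) (rule ig)
    then show ?thesis by (simp only: integral_mult_right_zero integral_complex_of_real)
  qed
  ultimately show ?thesis by simp
qed


lemma mgf_unique_prob:
  fixes M1 M2 :: "real measure"
  assumes D1: "real_distribution M1" and D2: "real_distribution M2"
    and I1: "\<And>s. integrable M1 (\<lambda>x. exp (s*x))" and I2: "\<And>s. integrable M2 (\<lambda>x. exp (s*x))"
    and eq: "\<And>s. (\<integral>x. exp (s*x) \<partial>M1) = (\<integral>x. exp (s*x) \<partial>M2)"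
  shows "M1 = M2"
proof -
  interpret M1: real_distribution M1 by fact
  interpret M2: real_distribution M2 by fact
  have sb1: "sets M1 = sets borel" and sb2: "sets M2 = sets borel" by simp_all
  define m1 where "m1 k = (\<integral>x. x^k \<partial>M1)" for k
  define m2 where "m2 k = (\<integral>x. x^k \<partial>M2)" for k
  have conv: "(CLINT y|M. exp (complex_of_real x * complex_of_real y)) = complex_of_real (\<integral>y. exp (x*y) \<partial>M)"
    for x and M :: "real measure"
    by (simp only: of_real_mult[symmetric] exp_of_real integral_complex_of_real)
  have mom: "m1 k = m2 k" for k
  proof -
    define a where "a k = (m1 k - m2 k) / fact k" for k
    have "(\<lambda>k. a k * x^k) sums 0" for x :: real
    proof -
      have L1: "(\<lambda>n. \<Sum>k\<le>n. (complex_of_real x)^k / fact k * complex_of_real (m1 k)) \<longlonglongrightarrow> complex_of_real (\<integral>y. exp (x*y) \<partial>M1)"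
        using mgf_series[OF sb1 I1, of "complex_of_real x"] unfolding conv m1_def .
      have L2: "(\<lambda>n. \<Sum>k\<le>n. (complex_of_real x)^k / fact k * complex_of_real (m2 k)) \<longlonglongrightarrow> complex_of_real (\<integral>y. exp (x*y) \<partial>M2)"
        using mgf_series[OF sb2 I2, of "complex_of_real x"] unfolding conv m2_def .
      have "(\<lambda>n. (\<Sum>k\<le>n. (complex_of_real x)^k / fact k * complex_of_real (m1 k)) - (\<Sum>k\<le>n. (complex_of_real x)^k / fact k * complex_of_real (m2 k)))
          \<longlonglongrightarrow> complex_of_real (\<integral>y. exp (x*y) \<partial>M1) - complex_of_real (\<integral>y. exp (x*y) \<partial>M2)"
        by (rule tendsto_diff[OF L1 L2])
      moreover have "(\<Sum>k\<le>n. (complex_of_real x)^k / fact k * complex_of_real (m1 k)) - (\<Sum>k\<le>n. (complex_of_real x)^k / fact k * complex_of_real (m2 k))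
          = complex_of_real (\<Sum>k\<le>n. a k * x^k)" for n
        by (simp add: a_def sum_subtractf[symmetric] field_simps)
      ultimately have "(\<lambda>n. complex_of_real (\<Sum>k\<le>n. a k * x^k)) \<longlonglongrightarrow> complex_of_real 0"
        using eq[of x] by simp
      then have "(\<lambda>n. \<Sum>k\<le>n. a k * x^k) \<longlonglongrightarrow> 0" by (simp only: tendsto_of_real_iff)
      then show ?thesis by (simp add: sums_def_le)
    qed
    then have "a k = 0" by (rule powser_coeffs_zero)
    then show ?thesis by (simp add: a_def)
  qed
  have "char M1 = char M2"
  proof
    fix t
    have c: "char M t = (CLINT x|M. exp ((\<i> * complex_of_real t) * complex_of_real x))" for M
      unfolding char_def by (simp add: mult.assoc)
    have L1: "(\<lambda>n. \<Sum>k\<le>n. (\<i> * complex_of_real t)^k / fact k * complex_of_real (m1 k)) \<longlonglongrightarrow> char M1 t"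
      using mgf_series[OF sb1 I1, of "\<i> * complex_of_real t"] unfolding c m1_def .
    have L2: "(\<lambda>n. \<Sum>k\<le>n. (\<i> * complex_of_real t)^k / fact k * complex_of_real (m2 k)) \<longlonglongrightarrow> char M2 t"
      using mgf_series[OF sb2 I2, of "\<i> * complex_of_real t"] unfolding c m2_def .
    show "char M1 t = char M2 t" using LIMSEQ_unique[OF L1[unfolded mom] L2] .
  qed
  then show ?thesis by (rule Levy_uniqueness[OF D1 D2])
qed


lemma mgf_unique_fin:
  fixes M1 M2 :: "real measure"
  assumes sb1: "sets M1 = sets borel" and sb2: "sets M2 = sets borel"
    and fin: "\<And>s. (\<integral>\<^sup>+x. ennreal (exp (s*x)) \<partial>M1) < \<infinity>"
    and eq: "\<And>s. (\<integral>\<^sup>+x. ennreal (exp (s*x)) \<partial>M1) = (\<integral>\<^sup>+x. ennreal (exp (s*x)) \<partial>M2)"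
  shows "M1 = M2"
proof -
  have sp1: "space M1 = UNIV" using sets_eq_imp_space_eq[OF sb1] by simp
  have sp2: "space M2 = UNIV" using sets_eq_imp_space_eq[OF sb2] by simp
  define c where "c = emeasure M1 (space M1)"
  have c1: "(\<integral>\<^sup>+x. ennreal (exp (0*x)) \<partial>M1) = c" by (simp add: c_def)
  have c2: "emeasure M2 (space M2) = c" using eq[of 0] c1 by simp
  have cfin: "c < \<infinity>" using fin[of 0] c1 by simp
  show ?thesis
  proof (cases "c = 0")
    case True
    show ?thesis
    proof (rule measure_eqI)
      show "sets M1 = sets M2" using sb1 sb2 by simp
      fix A assume A: "A \<in> sets M1"
      then have A2: "A \<in> sets M2" using sb1 sb2 by simp
      have "emeasure M1 A \<le> emeasure M1 (space M1)" by (rule emeasure_space)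
      then have "emeasure M1 A = 0" using True c_def by simp
      moreover have "emeasure M2 A \<le> emeasure M2 (space M2)" by (rule emeasure_space)
      then have "emeasure M2 A = 0" using True c2 by simp
      ultimately show "emeasure M1 A = emeasure M2 A" by simp
    qed
  next
    case False
    define r where "r = enn2real c"
    have r: "0 < r" "c = ennreal r" using False cfin unfolding r_def
      by (auto simp: enn2real_positive_iff less_top[symmetric] zero_less_iff_neq_zero)
    define N1 where "N1 = density M1 (\<lambda>_. ennreal (1/r))"
    define N2 where "N2 = density M2 (\<lambda>_. ennreal (1/r))"
    have sN1: "sets N1 = sets borel" and sN2: "sets N2 = sets borel"
      unfolding N1_def N2_def using sb1 sb2 by simp_all
    have emN1: "emeasure N1 A = ennreal (1/r) * emeasure M1 A" if "A \<in> sets M1" for A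
      unfolding N1_def using that by (simp add: emeasure_density nn_integral_cmult_indicator)
    have emN2: "emeasure N2 A = ennreal (1/r) * emeasure M2 A" if "A \<in> sets M2" for A
      unfolding N2_def using that by (simp add: emeasure_density nn_integral_cmult_indicator)
    have one: "ennreal (1/r) * c = 1" using r by (simp add: ennreal_mult[symmetric])
    have D1: "real_distribution N1"
    proof -
      have "prob_space N1"
      proof (rule prob_spaceI)
        have "space N1 = space M1" unfolding N1_def by simp
        then show "emeasure N1 (space N1) = 1" using emN1[OF sets.top[of M1]] one unfolding c_def by simp
      qed
      then show ?thesis unfolding real_distribution_def real_distribution_axioms_def using sN1 by simp
    qed
    have D2: "real_distribution N2"
    proof -
      have "prob_space N2"
      proof (rule prob_spaceI)
        have "space N2 = space M2" unfolding N2_def by simp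
        then show "emeasure N2 (space N2) = 1" using emN2[OF sets.top[of M2]] one c2 by simp
      qed
      then show ?thesis unfolding real_distribution_def real_distribution_axioms_def using sN2 by simp
    qed
    have nnN1: "(\<integral>\<^sup>+x. ennreal (exp (s*x)) \<partial>N1) = ennreal (1/r) * (\<integral>\<^sup>+x. ennreal (exp (s*x)) \<partial>M1)" for s
    proof -
      have m: "(\<lambda>x. ennreal (exp (s*x))) \<in> borel_measurable M1" unfolding measurable_cong_sets[OF sb1 refl] by measurable
      have "(\<integral>\<^sup>+x. ennreal (exp (s*x)) \<partial>N1) = (\<integral>\<^sup>+x. ennreal (1/r) * ennreal (exp (s*x)) \<partial>M1)"
        unfolding N1_def by (rule nn_integral_density) (simp_all add: m)
      then show ?thesis using nn_integral_cmult[OF m, of "ennreal (1/r)"] by simp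
    qed
    have nnN2: "(\<integral>\<^sup>+x. ennreal (exp (s*x)) \<partial>N2) = ennreal (1/r) * (\<integral>\<^sup>+x. ennreal (exp (s*x)) \<partial>M2)" for s
    proof -
      have m: "(\<lambda>x. ennreal (exp (s*x))) \<in> borel_measurable M2" unfolding measurable_cong_sets[OF sb2 refl] by measurable
      have "(\<integral>\<^sup>+x. ennreal (exp (s*x)) \<partial>N2) = (\<integral>\<^sup>+x. ennreal (1/r) * ennreal (exp (s*x)) \<partial>M2)"
        unfolding N2_def by (rule nn_integral_density) (simp_all add: m)
      then show ?thesis using nn_integral_cmult[OF m, of "ennreal (1/r)"] by simp
    qed
    have fin1: "(\<integral>\<^sup>+x. ennreal (exp (s*x)) \<partial>N1) < \<infinity>" for s
      unfolding nnN1 using fin[of s] by (simp add: ennreal_mult_less_top)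
    have fin2: "(\<integral>\<^sup>+x. ennreal (exp (s*x)) \<partial>N2) < \<infinity>" for s
      unfolding nnN2 using fin[of s] eq[of s] by (simp add: ennreal_mult_less_top)
    have mN1: "(\<lambda>x. exp (s*x)) \<in> borel_measurable N1" for s unfolding measurable_cong_sets[OF sN1 refl] by measurable
    have mN2: "(\<lambda>x. exp (s*x)) \<in> borel_measurable N2" for s unfolding measurable_cong_sets[OF sN2 refl] by measurable
    have I1: "integrable N1 (\<lambda>x. exp (s*x))" for s
      by (rule integrableI_nonneg[OF mN1]) (use fin1 in auto)
    have I2: "integrable N2 (\<lambda>x. exp (s*x))" for s
      by (rule integrableI_nonneg[OF mN2]) (use fin2 in auto)
    have E: "(\<integral>x. exp (s*x) \<partial>N1) = (\<integral>x. exp (s*x) \<partial>N2)" for s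
      by (simp add: integral_eq_nn_integral[OF mN1] integral_eq_nn_integral[OF mN2] nnN1 nnN2 eq)
    have NN: "N1 = N2" by (rule mgf_unique_prob[OF D1 D2 I1 I2 E])
    show ?thesis
    proof (rule measure_eqI)
      show "sets M1 = sets M2" using sb1 sb2 by simp
      fix A assume A: "A \<in> sets M1"
      then have A2: "A \<in> sets M2" using sb1 sb2 by simp
      have "ennreal r * emeasure N1 A = emeasure M1 A"
        using r(1) by (simp add: emN1[OF A] mult.assoc[symmetric] ennreal_mult[symmetric])
      moreover have "ennreal r * emeasure N2 A = emeasure M2 A"
        using r(1) by (simp add: emN2[OF A2] mult.assoc[symmetric] ennreal_mult[symmetric])
      ultimately show "emeasure M1 A = emeasure M2 A" using NN by simp
    qed
  qed
qed


definition Lf :: "'a measure \<Rightarrow> (nat \<Rightarrow> 'a \<Rightarrow> real) \<Rightarrow> nat set \<Rightarrow> ('a \<Rightarrow> ennreal) \<Rightarrow> nat set \<Rightarrow> (nat \<Rightarrow> real set) \<Rightarrow> (nat \<Rightarrow> real) \<Rightarrow> ennreal" where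
  "Lf M V I h K Bs s = (\<integral>\<^sup>+\<omega>. h \<omega> * (\<Prod>i\<in>K. indicator (Bs i) (V i \<omega>)) * ennreal (exp (\<Sum>i\<in>I-K. s i * V i \<omega>)) \<partial>M)"

lemma U_aux:
  fixes M :: "'a measure" and V :: "nat \<Rightarrow> 'a \<Rightarrow> real" and f g :: "'a \<Rightarrow> ennreal"
  assumes Vm[measurable]: "\<And>i. V i \<in> borel_measurable M"
    and fm[measurable]: "f \<in> borel_measurable M" and gm[measurable]: "g \<in> borel_measurable M"
    and finI: "finite I"
    and H: "\<And>s. Lf M V I f {} (\<lambda>_. UNIV) s = Lf M V I g {} (\<lambda>_. UNIV) s"
    and Hfin: "\<And>s. Lf M V I f {} (\<lambda>_. UNIV) s < \<infinity>"
  shows "finite K \<Longrightarrow> K \<subseteq> I \<Longrightarrow> \<forall>Bs s. (\<forall>i\<in>K. Bs i \<in> sets borel) \<longrightarrow>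
     Lf M V I f K Bs s = Lf M V I g K Bs s \<and> Lf M V I f K Bs s < \<infinity>"
proof (induction K rule: finite_induct)
  case empty
  have e: "Lf M V I h {} Bs s = Lf M V I h {} (\<lambda>_. UNIV) s" for h Bs s unfolding Lf_def by simp
  show ?case
  proof (intro allI impI)
    fix Bs :: "nat \<Rightarrow> real set" and s :: "nat \<Rightarrow> real"
    show "Lf M V I f {} Bs s = Lf M V I g {} Bs s \<and> Lf M V I f {} Bs s < \<infinity>"
      using H[of s] Hfin[of s] e[of f Bs s] e[of g Bs s] by simp
  qed
next
  case (insert j K)
  have jI: "j \<in> I" and KI: "K \<subseteq> I" using insert.prems by auto
  have IH: "\<And>Bs s. (\<forall>i\<in>K. Bs i \<in> sets borel) \<Longrightarrow> Lf M V I f K Bs s = Lf M V I g K Bs s \<and> Lf M V I f K Bs s < \<infinity>"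
    using insert.IH[OF KI] by blast
  show ?case
  proof (intro allI impI)
    fix Bs :: "nat \<Rightarrow> real set" and s :: "nat \<Rightarrow> real" assume BB: "\<forall>i\<in>insert j K. Bs i \<in> sets borel"
    have BK: "\<forall>i\<in>K. Bs i \<in> sets borel" using BB by auto
    have Bj: "Bs j \<in> sets borel" using BB by auto
    define P where "P h \<omega> = h \<omega> * (\<Prod>i\<in>K. indicator (Bs i) (V i \<omega>)) * ennreal (exp (\<Sum>i\<in>I - insert j K. s i * V i \<omega>))" for h \<omega>
    have prodm: "(\<lambda>\<omega>. (\<Prod>i\<in>K. indicator (Bs i) (V i \<omega>) :: ennreal)) \<in> borel_measurable M"
      by (rule borel_measurable_prod_ennreal, rule measurable_compose[OF Vm borel_measurable_indicator])
        (simp add: BK)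
    have summ: "(\<lambda>\<omega>. ennreal (exp (\<Sum>i\<in>I - insert j K. s i * V i \<omega>))) \<in> borel_measurable M"
      by measurable
    have Pm: "P h \<in> borel_measurable M" if "h \<in> borel_measurable M" for h
      unfolding P_def by (intro borel_measurable_times_ennreal that prodm summ)
    have split: "(\<Sum>i\<in>I - K. (s(j:=t)) i * V i \<omega>) = t * V j \<omega> + (\<Sum>i\<in>I - insert j K. s i * V i \<omega>)" for t \<omega>
    proof -
      have e: "I - K = insert j (I - insert j K)" using jI insert.hyps by auto
      have "(\<Sum>i\<in>I - K. (s(j:=t)) i * V i \<omega>) = (\<Sum>i\<in>insert j (I - insert j K). (s(j:=t)) i * V i \<omega>)"
        by (subst e) (rule refl)
      also have "\<dots> = (s(j:=t)) j * V j \<omega> + (\<Sum>i\<in>I - insert j K. (s(j:=t)) i * V i \<omega>)"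
        by (rule sum.insert) (use finI in auto)
      also have "(\<Sum>i\<in>I - insert j K. (s(j:=t)) i * V i \<omega>) = (\<Sum>i\<in>I - insert j K. s i * V i \<omega>)"
        by (rule sum.cong) auto
      finally show ?thesis by simp
    qed
    have mgf: "(\<integral>\<^sup>+y. ennreal (exp (t*y)) \<partial>distr (density M (P h)) borel (V j)) = Lf M V I h K Bs (s(j:=t))"
      if hm: "h \<in> borel_measurable M" for h t
    proof -
      have [measurable]: "P h \<in> borel_measurable M" by (rule Pm[OF hm])
      have "(\<integral>\<^sup>+y. ennreal (exp (t*y)) \<partial>distr (density M (P h)) borel (V j)) =
          (\<integral>\<^sup>+\<omega>. ennreal (exp (t * V j \<omega>)) \<partial>density M (P h))"
        by (rule nn_integral_distr) simp_all
      also have "\<dots> = (\<integral>\<^sup>+\<omega>. P h \<omega> * ennreal (exp (t * V j \<omega>)) \<partial>M)"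
        by (rule nn_integral_density) simp_all
      also have "\<dots> = Lf M V I h K Bs (s(j:=t))"
        unfolding Lf_def
      proof (rule nn_integral_cong)
        fix \<omega>
        have "ennreal (exp (\<Sum>i\<in>I - K. (s(j:=t)) i * V i \<omega>)) = ennreal (exp (t * V j \<omega>)) * ennreal (exp (\<Sum>i\<in>I - insert j K. s i * V i \<omega>))"
          unfolding split by (simp add: exp_add ennreal_mult)
        then show "P h \<omega> * ennreal (exp (t * V j \<omega>)) =
          h \<omega> * (\<Prod>i\<in>K. indicator (Bs i) (V i \<omega>)) * ennreal (exp (\<Sum>i\<in>I - K. (s(j:=t)) i * V i \<omega>))"
          unfolding P_def by (simp add: mult_ac)
      qed
      finally show ?thesis .
    qed
    have eqdist: "distr (density M (P f)) borel (V j) = distr (density M (P g)) borel (V j)"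
    proof (rule mgf_unique_fin)
      show "(\<integral>\<^sup>+x. ennreal (exp (t * x)) \<partial>distr (density M (P f)) borel (V j)) < \<infinity>" for t
        unfolding mgf[OF fm] using IH[OF BK] by blast
      show "(\<integral>\<^sup>+x. ennreal (exp (t * x)) \<partial>distr (density M (P f)) borel (V j)) =
            (\<integral>\<^sup>+x. ennreal (exp (t * x)) \<partial>distr (density M (P g)) borel (V j))" for t
        unfolding mgf[OF fm] mgf[OF gm] using IH[OF BK] by blast
    qed simp_all
    have em: "emeasure (distr (density M (P h)) borel (V j)) (Bs j) = Lf M V I h (insert j K) Bs s"
      if hm: "h \<in> borel_measurable M" for h
    proof -
      have [measurable]: "P h \<in> borel_measurable M" by (rule Pm[OF hm])
      have [measurable]: "Bs j \<in> sets borel" by (rule Bj)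
      have "emeasure (distr (density M (P h)) borel (V j)) (Bs j) = emeasure (density M (P h)) (V j -` Bs j \<inter> space M)"
        using emeasure_distr[of "V j" "density M (P h)" borel "Bs j"] by simp
      also have "\<dots> = (\<integral>\<^sup>+\<omega>. P h \<omega> * indicator (V j -` Bs j \<inter> space M) \<omega> \<partial>M)"
        by (rule emeasure_density) simp_all
      also have "\<dots> = Lf M V I h (insert j K) Bs s"
        unfolding Lf_def
      proof (rule nn_integral_cong)
        fix \<omega> assume "\<omega> \<in> space M"
        then have "indicator (V j -` Bs j \<inter> space M) \<omega> = (indicator (Bs j) (V j \<omega>) :: ennreal)"
          by (simp add: indicator_def)
        moreover have "(\<Prod>i\<in>insert j K. indicator (Bs i) (V i \<omega>)) = (indicator (Bs j) (V j \<omega>) :: ennreal) * (\<Prod>i\<in>K. indicator (Bs i) (V i \<omega>))"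
          by (rule prod.insert) (use insert.hyps in auto)
        ultimately show "P h \<omega> * indicator (V j -` Bs j \<inter> space M) \<omega> =
          h \<omega> * (\<Prod>i\<in>insert j K. indicator (Bs i) (V i \<omega>)) * ennreal (exp (\<Sum>i\<in>I - insert j K. s i * V i \<omega>))"
          unfolding P_def by (simp only: mult_ac)
      qed
      finally show ?thesis .
    qed
    have fin: "emeasure (distr (density M (P f)) borel (V j)) (Bs j) < \<infinity>"
    proof -
      have "emeasure (distr (density M (P f)) borel (V j)) (Bs j) \<le> emeasure (distr (density M (P f)) borel (V j)) (space (distr (density M (P f)) borel (V j)))"
        by (rule emeasure_space)
      also have "\<dots> = (\<integral>\<^sup>+y. ennreal (exp (0*y)) \<partial>distr (density M (P f)) borel (V j))" by simp
      also have "\<dots> < \<infinity>" unfolding mgf[OF fm] using IH[OF BK] by blast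
      finally show ?thesis .
    qed
    show "Lf M V I f (insert j K) Bs s = Lf M V I g (insert j K) Bs s \<and> Lf M V I f (insert j K) Bs s < \<infinity>"
      using em[OF fm] em[OF gm] eqdist fin by simp
  qed
qed


lemma normal_exp_identity:
  fixes \<sigma> x :: real assumes "0 < \<sigma>"
  shows "normal_density 0 \<sigma> x * exp x = exp (\<sigma>\<^sup>2 / 2) * normal_density (\<sigma>\<^sup>2) \<sigma> x"
proof -
  have "-(x - 0)\<^sup>2 / (2 * \<sigma>\<^sup>2) + x = \<sigma>\<^sup>2 / 2 + -(x - \<sigma>\<^sup>2)\<^sup>2 / (2 * \<sigma>\<^sup>2)"
    using assms by (simp add: field_simps power2_eq_square)
  then have "exp (-(x - 0)\<^sup>2 / (2 * \<sigma>\<^sup>2)) * exp x = exp (\<sigma>\<^sup>2 / 2) * exp (-(x - \<sigma>\<^sup>2)\<^sup>2 / (2 * \<sigma>\<^sup>2))"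
    by (simp only: exp_add[symmetric])
  then show ?thesis unfolding normal_density_def by (simp add: mult_ac)
qed

lemma normal_mgf:
  fixes \<sigma> :: real assumes "0 < \<sigma>"
  shows "integrable lborel (\<lambda>x. normal_density 0 \<sigma> x * exp x)"
    "(\<integral>x. normal_density 0 \<sigma> x * exp x \<partial>lborel) = exp (\<sigma>\<^sup>2 / 2)"
  unfolding normal_exp_identity[OF assms] using assms by simp_all

locale fbm_ctx =
  fixes M :: "'a measure" and B :: "real \<Rightarrow> 'a \<Rightarrow> real" and H :: real
  assumes fbm: "fbm_on_unit M H B"
begin

lemma prob: "prob_space M" using fbm unfolding fbm_on_unit_def by simp

sublocale prob_space M by (rule prob)

lemma Bmeas: "t \<in> {0..1} \<Longrightarrow> B t \<in> borel_measurable M"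
  using fbm unfolding fbm_on_unit_def by simp

lemma Bint: "t \<in> {0..1} \<Longrightarrow> integrable M (B t)" "t \<in> {0..1} \<Longrightarrow> integral\<^sup>L M (B t) = 0"
  using fbm unfolding fbm_on_unit_def by simp_all

lemma Bprod: "s \<in> {0..1} \<Longrightarrow> t \<in> {0..1} \<Longrightarrow> integrable M (\<lambda>\<omega>. B s \<omega> * B t \<omega>)"
  "s \<in> {0..1} \<Longrightarrow> t \<in> {0..1} \<Longrightarrow> integral\<^sup>L M (\<lambda>\<omega>. B s \<omega> * B t \<omega>) =
          (\<bar>s\<bar> powr (2*H) + \<bar>t\<bar> powr (2*H) - \<bar>s - t\<bar> powr (2*H)) / 2"
  using fbm unfolding fbm_on_unit_def by simp_all

lemma Bgauss: "finite S \<Longrightarrow> S \<subseteq> {0..1} \<Longrightarrow> gaussian_rv M (\<lambda>\<omega>. \<Sum>t\<in>S. c t * B t \<omega>)"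
  using fbm unfolding fbm_on_unit_def by simp

definition lin :: "('a \<Rightarrow> real) \<Rightarrow> bool" where
  "lin w \<longleftrightarrow> (\<exists>S c. finite S \<and> S \<subseteq> {0..1} \<and> w = (\<lambda>\<omega>. \<Sum>t\<in>S. c t * B t \<omega>))"

lemma lin_B: "t \<in> {0..1} \<Longrightarrow> lin (B t)"
  unfolding lin_def by (rule exI[of _ "{t}"], rule exI[of _ "\<lambda>_. 1"]) auto

lemma lin_zero: "lin (\<lambda>\<omega>. 0)"
  unfolding lin_def by (rule exI[of _ "{}"]) auto

lemma sum_extend:
  assumes "finite S" "S1 \<subseteq> S"
  shows "(\<Sum>t\<in>S. (if t \<in> S1 then c t else 0) * B t \<omega>) = (\<Sum>t\<in>S1. c t * B t \<omega>)"
proof -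
  have "(\<Sum>t\<in>S. (if t \<in> S1 then c t else 0) * B t \<omega>) = (\<Sum>t\<in>S. if t \<in> S1 then c t * B t \<omega> else 0)"
    by (rule sum.cong) auto
  also have "\<dots> = (\<Sum>t\<in>S \<inter> S1. c t * B t \<omega>)" by (simp add: sum.inter_restrict[symmetric] assms(1) indicator_def)
  also have "S \<inter> S1 = S1" using assms by auto
  finally show ?thesis .
qed

lemma lin_add: "lin u \<Longrightarrow> lin v \<Longrightarrow> lin (\<lambda>\<omega>. u \<omega> + v \<omega>)"
proof -
  assume "lin u" "lin v"
  then obtain S1 c1 S2 c2 where h: "finite S1" "S1 \<subseteq> {0..1}" "u = (\<lambda>\<omega>. \<Sum>t\<in>S1. c1 t * B t \<omega>)"
    "finite S2" "S2 \<subseteq> {0..1}" "v = (\<lambda>\<omega>. \<Sum>t\<in>S2. c2 t * B t \<omega>)" unfolding lin_def by blast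
  let ?c = "\<lambda>t. (if t \<in> S1 then c1 t else 0) + (if t \<in> S2 then c2 t else 0)"
  have eq: "(\<lambda>\<omega>. u \<omega> + v \<omega>) = (\<lambda>\<omega>. \<Sum>t\<in>S1 \<union> S2. ?c t * B t \<omega>)"
  proof
    fix \<omega>
    have "(\<Sum>t\<in>S1 \<union> S2. ?c t * B t \<omega>) = (\<Sum>t\<in>S1 \<union> S2. (if t \<in> S1 then c1 t else 0) * B t \<omega>) + (\<Sum>t\<in>S1 \<union> S2. (if t \<in> S2 then c2 t else 0) * B t \<omega>)"
      by (simp only: distrib_right sum.distrib)
    also have "(\<Sum>t\<in>S1 \<union> S2. (if t \<in> S1 then c1 t else 0) * B t \<omega>) = u \<omega>"
      unfolding h(3) by (rule sum_extend) (use h in auto)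
    also have "(\<Sum>t\<in>S1 \<union> S2. (if t \<in> S2 then c2 t else 0) * B t \<omega>) = v \<omega>"
      unfolding h(6) by (rule sum_extend) (use h in auto)
    finally show "u \<omega> + v \<omega> = (\<Sum>t\<in>S1 \<union> S2. ?c t * B t \<omega>)" by simp
  qed
  show ?thesis unfolding lin_def
  proof (intro exI conjI)
    show "finite (S1 \<union> S2)" using h by simp
    show "S1 \<union> S2 \<subseteq> {0..1}" using h by simp
    show "(\<lambda>\<omega>. u \<omega> + v \<omega>) = (\<lambda>\<omega>. \<Sum>t\<in>S1 \<union> S2. ?c t * B t \<omega>)" by (rule eq)
  qed
qed

lemma lin_scale: "lin u \<Longrightarrow> lin (\<lambda>\<omega>. a * u \<omega>)"
proof -
  assume "lin u"
  then obtain S c where h: "finite S" "S \<subseteq> {0..1}" "u = (\<lambda>\<omega>. \<Sum>t\<in>S. c t * B t \<omega>)" unfolding lin_def by blast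
  have eq: "(\<lambda>\<omega>. a * u \<omega>) = (\<lambda>\<omega>. \<Sum>t\<in>S. (a * c t) * B t \<omega>)" unfolding h(3) by (simp add: sum_distrib_left mult_ac)
  show ?thesis unfolding lin_def
  proof (intro exI conjI)
    show "finite S" "S \<subseteq> {0..1}" using h by simp_all
    show "(\<lambda>\<omega>. a * u \<omega>) = (\<lambda>\<omega>. \<Sum>t\<in>S. (a * c t) * B t \<omega>)" by (rule eq)
  qed
qed

lemma lin_diff: "lin u \<Longrightarrow> lin v \<Longrightarrow> lin (\<lambda>\<omega>. u \<omega> - v \<omega>)"
  using lin_add[of u "\<lambda>\<omega>. (-1) * v \<omega>"] lin_scale[of v "-1"] by simp

lemma lin_sum: "finite I \<Longrightarrow> (\<And>i. i \<in> I \<Longrightarrow> lin (u i)) \<Longrightarrow> lin (\<lambda>\<omega>. \<Sum>i\<in>I. u i \<omega>)"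
proof (induction I rule: finite_induct)
  case empty
  then show ?case using lin_zero by simp
next
  case (insert x F)
  have "lin (\<lambda>\<omega>. u x \<omega> + (\<Sum>i\<in>F. u i \<omega>))"
    by (rule lin_add) (use insert in auto)
  then show ?case using insert.hyps by simp
qed

lemma lin_meas: "lin u \<Longrightarrow> u \<in> borel_measurable M"
  unfolding lin_def using Bmeas by (auto intro!: borel_measurable_sum borel_measurable_times)

lemma lin_int: "lin u \<Longrightarrow> integrable M u" "lin u \<Longrightarrow> integral\<^sup>L M u = 0"
proof -
  assume "lin u"
  then obtain S c where h: "finite S" "S \<subseteq> {0..1}" "u = (\<lambda>\<omega>. \<Sum>t\<in>S. c t * B t \<omega>)" unfolding lin_def by blast
  have i: "\<And>t. t \<in> S \<Longrightarrow> integrable M (\<lambda>\<omega>. c t * B t \<omega>)" using h Bint by auto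
  show "integrable M u" using h i by simp
  show "integral\<^sup>L M u = 0" using h i Bint by (simp add: Bochner_Integration.integral_sum subset_iff)
qed

lemma lin_prod_int: "lin u \<Longrightarrow> lin v \<Longrightarrow> integrable M (\<lambda>\<omega>. u \<omega> * v \<omega>)"
proof -
  assume "lin u" "lin v"
  then obtain S1 c1 S2 c2 where h: "finite S1" "S1 \<subseteq> {0..1}" "u = (\<lambda>\<omega>. \<Sum>t\<in>S1. c1 t * B t \<omega>)"
    "finite S2" "S2 \<subseteq> {0..1}" "v = (\<lambda>\<omega>. \<Sum>t\<in>S2. c2 t * B t \<omega>)" unfolding lin_def by blast
  have e: "u \<omega> * v \<omega> = (\<Sum>t\<in>S1. \<Sum>s\<in>S2. (c1 t * c2 s) * (B t \<omega> * B s \<omega>))" for \<omega>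
    using h by (simp add: sum_product mult_ac)
  have "integrable M (\<lambda>\<omega>. \<Sum>t\<in>S1. \<Sum>s\<in>S2. (c1 t * c2 s) * (B t \<omega> * B s \<omega>))"
  proof (intro Bochner_Integration.integrable_sum integrable_mult_right)
    fix t s assume "t \<in> S1" "s \<in> S2"
    then show "integrable M (\<lambda>\<omega>. B t \<omega> * B s \<omega>)" using h by (intro Bprod(1)) auto
  qed
  then show ?thesis unfolding e .
qed

lemma lin_gauss: "lin u \<Longrightarrow> gaussian_rv M u"
  unfolding lin_def using Bgauss by auto

definition E2 :: "('a \<Rightarrow> real) \<Rightarrow> ('a \<Rightarrow> real) \<Rightarrow> real" where
  "E2 u v = (\<integral>\<omega>. u \<omega> * v \<omega> \<partial>M)"

lemma E2_sym: "E2 u v = E2 v u" unfolding E2_def by (simp add: mult.commute)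

lemma E2_add_left: "lin u1 \<Longrightarrow> lin u2 \<Longrightarrow> lin v \<Longrightarrow> E2 (\<lambda>\<omega>. u1 \<omega> + u2 \<omega>) v = E2 u1 v + E2 u2 v"
  unfolding E2_def using lin_prod_int[of u1 v] lin_prod_int[of u2 v] by (simp add: distrib_right)

lemma E2_scale_left: "E2 (\<lambda>\<omega>. a * u \<omega>) v = a * E2 u v"
  unfolding E2_def by (simp add: mult.assoc)

lemma E2_diff_left: "lin u1 \<Longrightarrow> lin u2 \<Longrightarrow> lin v \<Longrightarrow> E2 (\<lambda>\<omega>. u1 \<omega> - u2 \<omega>) v = E2 u1 v - E2 u2 v"
  unfolding E2_def using lin_prod_int[of u1 v] lin_prod_int[of u2 v] by (simp add: left_diff_distrib)

lemma E2_sum_left: "finite I \<Longrightarrow> (\<And>i. i \<in> I \<Longrightarrow> lin (u i)) \<Longrightarrow> lin v \<Longrightarrow> E2 (\<lambda>\<omega>. \<Sum>i\<in>I. u i \<omega>) v = (\<Sum>i\<in>I. E2 (u i) v)"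
  unfolding E2_def using lin_prod_int by (simp add: sum_distrib_right Bochner_Integration.integral_sum)

lemma E2_nonneg: "0 \<le> E2 u u"
  unfolding E2_def by simp

lemma E2_zero: assumes "lin u" "E2 u u = 0" "lin v" shows "E2 u v = 0"
proof -
  have "AE \<omega> in M. u \<omega> * u \<omega> = 0"
    using integral_nonneg_eq_0_iff_AE[of M "\<lambda>\<omega>. u \<omega> * u \<omega>"] lin_prod_int[OF assms(1,1)] assms(2)
    unfolding E2_def by simp
  then have "AE \<omega> in M. u \<omega> * v \<omega> = 0" by eventually_elim simp
  then have "(\<integral>\<omega>. u \<omega> * v \<omega> \<partial>M) = (\<integral>\<omega>. 0 \<partial>M)"
    using lin_meas[OF assms(1)] lin_meas[OF assms(3)] by (intro integral_cong_AE) auto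
  then show ?thesis unfolding E2_def by simp
qed

lemma lin_mgf: assumes "lin u"
  shows "integrable M (\<lambda>\<omega>. exp (u \<omega>))" "(\<integral>\<omega>. exp (u \<omega>) \<partial>M) = exp (E2 u u / 2)"
proof -
  have um[measurable]: "u \<in> borel_measurable M" by (rule lin_meas[OF assms])
  have mean: "integral\<^sup>L M u = 0" by (rule lin_int(2)[OF assms])
  have "(\<exists>c. AE \<omega> in M. u \<omega> = c) \<or> (\<exists>\<mu> \<sigma>. \<sigma> > 0 \<and> distributed M lborel u (normal_density \<mu> \<sigma>))"
    using lin_gauss[OF assms] unfolding gaussian_rv_def by simp
  then have "integrable M (\<lambda>\<omega>. exp (u \<omega>)) \<and> (\<integral>\<omega>. exp (u \<omega>) \<partial>M) = exp (E2 u u / 2)"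
  proof
    assume "\<exists>c. AE \<omega> in M. u \<omega> = c"
    then obtain c where c: "AE \<omega> in M. u \<omega> = c" by blast
    have "integral\<^sup>L M u = integral\<^sup>L M (\<lambda>_. c)" by (rule integral_cong_AE) (use c in auto)
    then have "c = 0" using mean prob_space by simp
    then have u0: "AE \<omega> in M. u \<omega> = 0" using c by simp
    have e1: "AE \<omega> in M. exp (u \<omega>) = 1" using u0 by eventually_elim simp
    have e2: "AE \<omega> in M. u \<omega> * u \<omega> = 0" using u0 by eventually_elim simp
    have "integrable M (\<lambda>\<omega>. exp (u \<omega>))"
      using integrable_cong_AE[of "\<lambda>\<omega>. exp (u \<omega>)" M "\<lambda>_. 1"] e1 by simp
    moreover have "(\<integral>\<omega>. exp (u \<omega>) \<partial>M) = (\<integral>\<omega>. 1 \<partial>M)" by (rule integral_cong_AE) (use e1 in auto)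
    moreover have "E2 u u = (\<integral>\<omega>. 0 \<partial>M)" unfolding E2_def by (rule integral_cong_AE) (use e2 in auto)
    ultimately show ?thesis using prob_space by simp
  next
    assume "\<exists>\<mu> \<sigma>. \<sigma> > 0 \<and> distributed M lborel u (normal_density \<mu> \<sigma>)"
    then obtain \<mu> \<sigma> where s: "\<sigma> > 0" and D: "distributed M lborel u (normal_density \<mu> \<sigma>)" by blast
    have "expectation u = \<mu>" by (rule normal_distributed_expectation[OF s D])
    then have "\<mu> = 0" using mean by simp
    then have D0: "distributed M lborel u (normal_density 0 \<sigma>)" using D by simp
    have "variance u = \<sigma>\<^sup>2" by (rule normal_distributed_variance[OF s D])
    then have v: "E2 u u = \<sigma>\<^sup>2" unfolding E2_def using mean by (simp add: power2_eq_square)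
    have "integrable M (\<lambda>\<omega>. exp (u \<omega>))"
      using distributed_integrable[OF D0, of exp] normal_mgf(1)[OF s] by simp
    moreover have "(\<integral>\<omega>. exp (u \<omega>) \<partial>M) = exp (\<sigma>\<^sup>2 / 2)"
      using distributed_integral[OF D0, of exp] normal_mgf(2)[OF s] by simp
    ultimately show ?thesis using v by simp
  qed
  then show "integrable M (\<lambda>\<omega>. exp (u \<omega>))" "(\<integral>\<omega>. exp (u \<omega>) \<partial>M) = exp (E2 u u / 2)" by simp_all
qed

end


lemma prod_indicator_ennreal:
  assumes "finite I"
  shows "(\<Prod>i\<in>I. indicator (Bs i) (V i \<omega>) :: ennreal) = indicator {\<omega>. \<forall>i\<in>I. V i \<omega> \<in> Bs i} \<omega>"
proof (cases "\<forall>i\<in>I. V i \<omega> \<in> Bs i")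
  case True
  then have "(\<Prod>i\<in>I. indicator (Bs i) (V i \<omega>) :: ennreal) = (\<Prod>i\<in>I. 1)"
    by (intro prod.cong) auto
  then show ?thesis using True by simp
next
  case False
  then obtain i where "i \<in> I" "V i \<omega> \<notin> Bs i" by blast
  then have "(\<Prod>i\<in>I. indicator (Bs i) (V i \<omega>) :: ennreal) = 0"
    using assms by (intro prod_zero) (auto intro!: bexI[of _ i])
  then show ?thesis using False by simp
qed

lemma ext_pi:
  fixes M G :: "'a measure" and E :: "'a set set" and f g :: "'a \<Rightarrow> ennreal"
  assumes IS: "Int_stable E" and EP: "E \<subseteq> Pow (space M)" and sG: "sets G = sigma_sets (space M) E"
    and top: "space M \<in> E" and sub: "subalgebra M G"
    and fm: "f \<in> borel_measurable M" and gm: "g \<in> borel_measurable M"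
    and eq: "\<And>C. C \<in> E \<Longrightarrow> (\<integral>\<^sup>+\<omega>. f \<omega> * indicator C \<omega> \<partial>M) = (\<integral>\<^sup>+\<omega>. g \<omega> * indicator C \<omega> \<partial>M)"
    and fin: "(\<integral>\<^sup>+\<omega>. f \<omega> \<partial>M) < \<infinity>"
    and A: "A \<in> sets G"
  shows "(\<integral>\<^sup>+\<omega>. f \<omega> * indicator A \<omega> \<partial>M) = (\<integral>\<^sup>+\<omega>. g \<omega> * indicator A \<omega> \<partial>M)"
proof -
  have subf: "subalgebra (density M f) G" and subg: "subalgebra (density M g) G"
    using sub unfolding subalgebra_def by auto
  define N1 where "N1 = restr_to_subalg (density M f) G"
  define N2 where "N2 = restr_to_subalg (density M g) G"
  have em1: "emeasure N1 C = (\<integral>\<^sup>+\<omega>. f \<omega> * indicator C \<omega> \<partial>M)" if "C \<in> sets G" for C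
  proof -
    have "C \<in> sets M" using that sub unfolding subalgebra_def by auto
    then show ?thesis unfolding N1_def using emeasure_restr_to_subalg[OF subf that] emeasure_density[OF fm] by simp
  qed
  have em2: "emeasure N2 C = (\<integral>\<^sup>+\<omega>. g \<omega> * indicator C \<omega> \<partial>M)" if "C \<in> sets G" for C
  proof -
    have "C \<in> sets M" using that sub unfolding subalgebra_def by auto
    then show ?thesis unfolding N2_def using emeasure_restr_to_subalg[OF subg that] emeasure_density[OF gm] by simp
  qed
  have EG: "C \<in> sets G" if "C \<in> E" for C using that sG by auto
  have "N1 = N2"
  proof (rule measure_eqI_generator_eq[OF IS EP])
    show "\<And>X. X \<in> E \<Longrightarrow> emeasure N1 X = emeasure N2 X" using em1 em2 eq EG by simp
    show "sets N1 = sigma_sets (space M) E" unfolding N1_def using sets_restr_to_subalg[OF subf] sG by simp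
    show "sets N2 = sigma_sets (space M) E" unfolding N2_def using sets_restr_to_subalg[OF subg] sG by simp
    show "range (\<lambda>i::nat. space M) \<subseteq> E" using top by auto
    show "(\<Union>i::nat. space M) = space M" by simp
    have "emeasure N1 (space M) = (\<integral>\<^sup>+\<omega>. f \<omega> * indicator (space M) \<omega> \<partial>M)" using em1 EG top by simp
    also have "\<dots> = (\<integral>\<^sup>+\<omega>. f \<omega> \<partial>M)" by (rule nn_integral_cong) simp
    finally show "\<And>i::nat. emeasure N1 (space M) \<noteq> \<infinity>" using fin by simp
  qed
  then show ?thesis using em1[OF A] em2[OF A] by simp
qed

context fbm_ctx
begin

lemma E2_add_right: "lin u \<Longrightarrow> lin v1 \<Longrightarrow> lin v2 \<Longrightarrow> E2 u (\<lambda>\<omega>. v1 \<omega> + v2 \<omega>) = E2 u v1 + E2 u v2"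
  using E2_add_left[of v1 v2 u] E2_sym by metis

lemma E2_diff_right: "lin u \<Longrightarrow> lin v1 \<Longrightarrow> lin v2 \<Longrightarrow> E2 u (\<lambda>\<omega>. v1 \<omega> - v2 \<omega>) = E2 u v1 - E2 u v2"
  using E2_diff_left[of v1 v2 u] E2_sym by metis

lemma E2_scale_right: "E2 u (\<lambda>\<omega>. a * v \<omega>) = a * E2 u v"
  using E2_scale_left[of a v u] E2_sym by metis

lemma E2_sum_right: "finite I \<Longrightarrow> (\<And>i. i \<in> I \<Longrightarrow> lin (v i)) \<Longrightarrow> lin u \<Longrightarrow> E2 u (\<lambda>\<omega>. \<Sum>i\<in>I. v i \<omega>) = (\<Sum>i\<in>I. E2 u (v i))"
proof -
  assume a: "finite I" "\<And>i. i \<in> I \<Longrightarrow> lin (v i)" "lin u"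
  have "E2 u (\<lambda>\<omega>. \<Sum>i\<in>I. v i \<omega>) = E2 (\<lambda>\<omega>. \<Sum>i\<in>I. v i \<omega>) u" by (rule E2_sym)
  also have "\<dots> = (\<Sum>i\<in>I. E2 (v i) u)" by (rule E2_sum_left[OF a])
  also have "\<dots> = (\<Sum>i\<in>I. E2 u (v i))" by (rule sum.cong) (simp_all add: E2_sym[of "v _" u])
  finally show ?thesis .
qed

definition Zs :: "(nat \<Rightarrow> real) \<Rightarrow> (nat \<Rightarrow> real) \<Rightarrow> nat set \<Rightarrow> 'a \<Rightarrow> real" where
  "Zs p c I \<omega> = (\<Sum>i\<in>I. c i * B (p i) \<omega>)"

lemma lin_Zs: "finite I \<Longrightarrow> (\<And>i. p i \<in> {0..1}) \<Longrightarrow> lin (Zs p c I)"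
proof -
  assume "finite I" "\<And>i. p i \<in> {0..1}"
  then have "lin (\<lambda>\<omega>. \<Sum>i\<in>I. c i * B (p i) \<omega>)"
    by (intro lin_sum lin_scale lin_B) auto
  then show ?thesis unfolding Zs_def[abs_def] .
qed

lemma E2_Zs_right: "finite I \<Longrightarrow> (\<And>i. p i \<in> {0..1}) \<Longrightarrow> lin u \<Longrightarrow> E2 u (Zs p c I) = (\<Sum>i\<in>I. c i * E2 u (B (p i)))"
proof -
  assume a: "finite I" "\<And>i. p i \<in> {0..1}" "lin u"
  have "E2 u (\<lambda>\<omega>. \<Sum>i\<in>I. c i * B (p i) \<omega>) = (\<Sum>i\<in>I. E2 u (\<lambda>\<omega>. c i * B (p i) \<omega>))"
    using a by (intro E2_sum_right lin_scale lin_B) auto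
  then show ?thesis unfolding Zs_def[abs_def] E2_scale_right .
qed

lemma projection:
  assumes p: "\<And>i. p i \<in> {0..1}"
  shows "finite I \<Longrightarrow> \<forall>x. lin x \<longrightarrow> (\<exists>c. \<forall>j\<in>I. E2 (\<lambda>\<omega>. x \<omega> - Zs p c I \<omega>) (B (p j)) = 0)"
proof (induction I rule: finite_induct)
  case empty
  then show ?case by simp
next
  case (insert k I)
  show ?case
  proof (intro allI impI)
    fix x assume x: "lin x"
    obtain c where c: "\<forall>j\<in>I. E2 (\<lambda>\<omega>. x \<omega> - Zs p c I \<omega>) (B (p j)) = 0" using insert.IH x by blast
    obtain d where d: "\<forall>j\<in>I. E2 (\<lambda>\<omega>. B (p k) \<omega> - Zs p d I \<omega>) (B (p j)) = 0" using insert.IH lin_B[OF p] by blast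
    define Y0 where "Y0 = (\<lambda>\<omega>. x \<omega> - Zs p c I \<omega>)"
    define W where "W = (\<lambda>\<omega>. B (p k) \<omega> - Zs p d I \<omega>)"
    have lZ: "lin (Zs p e I)" for e by (rule lin_Zs[OF insert.hyps(1) p])
    have lB: "lin (B (p j))" for j by (rule lin_B[OF p])
    have lY0: "lin Y0" unfolding Y0_def by (rule lin_diff[OF x lZ])
    have lW: "lin W" unfolding W_def by (rule lin_diff[OF lB lZ])
    have Y0j: "E2 Y0 (B (p j)) = 0" if "j \<in> I" for j using c that unfolding Y0_def by blast
    have Wj: "E2 W (B (p j)) = 0" if "j \<in> I" for j using d that unfolding W_def by blast
    have Bk: "B (p k) = (\<lambda>\<omega>. W \<omega> + Zs p d I \<omega>)" unfolding W_def by simp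
    have EZ: "E2 u (Zs p d I) = 0" if "lin u" "\<And>j. j \<in> I \<Longrightarrow> E2 u (B (p j)) = 0" for u
      using E2_Zs_right[OF insert.hyps(1) p that(1)] that(2) by simp
    have EBk: "E2 u (B (p k)) = E2 u W" if "lin u" "\<And>j. j \<in> I \<Longrightarrow> E2 u (B (p j)) = 0" for u
      using E2_add_right[OF that(1) lW lZ] EZ[OF that] Bk by simp
    have Zins: "Zs p e (insert k I) \<omega> = e k * B (p k) \<omega> + Zs p e I \<omega>" for e \<omega>
      unfolding Zs_def using insert.hyps by simp
    have ZsI_cong: "Zs p e I = Zs p e' I" if "\<And>i. i \<in> I \<Longrightarrow> e i = e' i" for e e'
      unfolding Zs_def[abs_def] using that by (intro ext sum.cong) auto
    show "\<exists>c. \<forall>j\<in>insert k I. E2 (\<lambda>\<omega>. x \<omega> - Zs p c (insert k I) \<omega>) (B (p j)) = 0"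
    proof (cases "E2 W W = 0")
      case True
      define c' where "c' = c(k := 0)"
      have "Zs p c' I = Zs p c I" using insert.hyps(2) by (intro ZsI_cong) (auto simp: c'_def)
      then have Yeq: "(\<lambda>\<omega>. x \<omega> - Zs p c' (insert k I) \<omega>) = Y0"
        unfolding Y0_def by (simp add: Zins c'_def)
      have "E2 Y0 (B (p k)) = 0"
        using EBk[OF lY0 Y0j] E2_zero[OF lW True lY0] E2_sym by metis
      then have "\<forall>j\<in>insert k I. E2 Y0 (B (p j)) = 0" using Y0j by auto
      then show ?thesis unfolding Yeq[symmetric] by blast
    next
      case False
      define lam where "lam = E2 Y0 W / E2 W W"
      define c' where "c' = (\<lambda>i. c i - lam * d i)(k := lam)"
      have "Zs p c' I = (\<lambda>\<omega>. Zs p c I \<omega> - lam * Zs p d I \<omega>)"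
      proof -
        have "Zs p c' I = Zs p (\<lambda>i. c i - lam * d i) I" using insert.hyps(2) by (intro ZsI_cong) (auto simp: c'_def)
        also have "\<dots> = (\<lambda>\<omega>. Zs p c I \<omega> - lam * Zs p d I \<omega>)"
          unfolding Zs_def[abs_def]
        proof (rule ext)
          fix \<omega>
          have "(\<Sum>i\<in>I. (c i - lam * d i) * B (p i) \<omega>) = (\<Sum>i\<in>I. c i * B (p i) \<omega> - lam * (d i * B (p i) \<omega>))"
            by (rule sum.cong) (simp_all add: algebra_simps)
          also have "\<dots> = (\<Sum>i\<in>I. c i * B (p i) \<omega>) - lam * (\<Sum>i\<in>I. d i * B (p i) \<omega>)"
            by (simp only: sum_subtractf sum_distrib_left)
          finally show "(\<Sum>i\<in>I. (c i - lam * d i) * B (p i) \<omega>) = (\<Sum>i\<in>I. c i * B (p i) \<omega>) - lam * (\<Sum>i\<in>I. d i * B (p i) \<omega>)" .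
        qed
        finally show ?thesis .
      qed
      then have Yeq: "(\<lambda>\<omega>. x \<omega> - Zs p c' (insert k I) \<omega>) = (\<lambda>\<omega>. Y0 \<omega> - lam * W \<omega>)"
        unfolding Y0_def W_def by (auto simp: Zins c'_def algebra_simps)
      have lsW: "lin (\<lambda>\<omega>. lam * W \<omega>)" by (rule lin_scale[OF lW])
      have lY: "lin (\<lambda>\<omega>. Y0 \<omega> - lam * W \<omega>)" by (rule lin_diff[OF lY0 lsW])
      have Yj: "E2 (\<lambda>\<omega>. Y0 \<omega> - lam * W \<omega>) (B (p j)) = 0" if "j \<in> I" for j
        using E2_diff_left[OF lY0 lsW lB] E2_scale_left Y0j[OF that] Wj[OF that] by simp
      have "E2 (\<lambda>\<omega>. Y0 \<omega> - lam * W \<omega>) W = E2 Y0 W - lam * E2 W W"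
        using E2_diff_left[OF lY0 lsW lW] E2_scale_left by simp
      also have "\<dots> = 0" using False unfolding lam_def by simp
      finally have "E2 (\<lambda>\<omega>. Y0 \<omega> - lam * W \<omega>) (B (p k)) = 0"
        using EBk[OF lY Yj] by simp
      then have "\<forall>j\<in>insert k I. E2 (\<lambda>\<omega>. Y0 \<omega> - lam * W \<omega>) (B (p j)) = 0" using Yj by auto
      then show ?thesis unfolding Yeq[symmetric] by blast
    qed
  qed
qed

lemma mgf_indep:
  assumes Y: "lin Y" and I: "finite I" and p: "\<And>i. p i \<in> {0..1}"
    and orth: "\<And>j. j \<in> I \<Longrightarrow> E2 Y (B (p j)) = 0"
  shows "integrable M (\<lambda>\<omega>. exp (t * Y \<omega> + Zs p s I \<omega>))"
    "(\<integral>\<omega>. exp (t * Y \<omega> + Zs p s I \<omega>) \<partial>M) = (\<integral>\<omega>. exp (t * Y \<omega>) \<partial>M) * (\<integral>\<omega>. exp (Zs p s I \<omega>) \<partial>M)"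
proof -
  have lZ: "lin (Zs p s I)" by (rule lin_Zs[OF I p])
  have ltY: "lin (\<lambda>\<omega>. t * Y \<omega>)" by (rule lin_scale[OF Y])
  have lU: "lin (\<lambda>\<omega>. t * Y \<omega> + Zs p s I \<omega>)" by (rule lin_add[OF ltY lZ])
  show "integrable M (\<lambda>\<omega>. exp (t * Y \<omega> + Zs p s I \<omega>))" by (rule lin_mgf(1)[OF lU])
  have YZ: "E2 Y (Zs p s I) = 0" using E2_Zs_right[OF I p Y] orth by simp
  have "E2 (\<lambda>\<omega>. t * Y \<omega> + Zs p s I \<omega>) (\<lambda>\<omega>. t * Y \<omega> + Zs p s I \<omega>)
      = E2 (\<lambda>\<omega>. t * Y \<omega>) (\<lambda>\<omega>. t * Y \<omega>) + E2 (Zs p s I) (Zs p s I)"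
  proof -
    have a: "E2 (\<lambda>\<omega>. t * Y \<omega> + Zs p s I \<omega>) (\<lambda>\<omega>. t * Y \<omega> + Zs p s I \<omega>) =
      E2 (\<lambda>\<omega>. t * Y \<omega>) (\<lambda>\<omega>. t * Y \<omega> + Zs p s I \<omega>) + E2 (Zs p s I) (\<lambda>\<omega>. t * Y \<omega> + Zs p s I \<omega>)"
      by (rule E2_add_left[OF ltY lZ lU])
    have b: "E2 (\<lambda>\<omega>. t * Y \<omega>) (\<lambda>\<omega>. t * Y \<omega> + Zs p s I \<omega>) = E2 (\<lambda>\<omega>. t * Y \<omega>) (\<lambda>\<omega>. t * Y \<omega>) + E2 (\<lambda>\<omega>. t * Y \<omega>) (Zs p s I)"
      by (rule E2_add_right[OF ltY ltY lZ])
    have c: "E2 (Zs p s I) (\<lambda>\<omega>. t * Y \<omega> + Zs p s I \<omega>) = E2 (Zs p s I) (\<lambda>\<omega>. t * Y \<omega>) + E2 (Zs p s I) (Zs p s I)"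
      by (rule E2_add_right[OF lZ ltY lZ])
    have d: "E2 (\<lambda>\<omega>. t * Y \<omega>) (Zs p s I) = 0" using YZ E2_scale_left by simp
    have e: "E2 (Zs p s I) (\<lambda>\<omega>. t * Y \<omega>) = 0" using d E2_sym by metis
    show ?thesis using a b c d e by simp
  qed
  then have "exp (E2 (\<lambda>\<omega>. t * Y \<omega> + Zs p s I \<omega>) (\<lambda>\<omega>. t * Y \<omega> + Zs p s I \<omega>) / 2)
      = exp (E2 (\<lambda>\<omega>. t * Y \<omega>) (\<lambda>\<omega>. t * Y \<omega>) / 2) * exp (E2 (Zs p s I) (Zs p s I) / 2)"
    by (simp add: exp_add[symmetric] add_divide_distrib)
  then show "(\<integral>\<omega>. exp (t * Y \<omega> + Zs p s I \<omega>) \<partial>M) = (\<integral>\<omega>. exp (t * Y \<omega>) \<partial>M) * (\<integral>\<omega>. exp (Zs p s I \<omega>) \<partial>M)"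
    using lin_mgf(2)[OF lU] lin_mgf(2)[OF ltY] lin_mgf(2)[OF lZ] by simp
qed

end


context fbm_ctx
begin

definition pN :: "nat \<Rightarrow> nat \<Rightarrow> real" where "pN n i = dyadic n (min i (2^n))"

lemma pN_range: "pN n i \<in> {0..1}"
  unfolding pN_def dyadic_def by (auto simp: field_simps)

definition Gen :: "nat \<Rightarrow> 'a set set" where
  "Gen n = {B (dyadic n i) -` A \<inter> space M | i A. i \<le> 2 ^ n \<and> A \<in> sets borel}"

definition Epi :: "nat \<Rightarrow> 'a set set" where
  "Epi n = {{\<omega> \<in> space M. \<forall>i\<in>{..2^n}. B (pN n i) \<omega> \<in> Bs i} | Bs. \<forall>i\<in>{..2^n}. Bs i \<in> sets borel}"

lemma Gen_Pow: "Gen n \<subseteq> Pow (space M)" unfolding Gen_def by auto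

lemma sets_G: "sets (gen_sigma M B n) = sigma_sets (space M) (Gen n)"
  unfolding gen_sigma_def Gen_def[symmetric] using Gen_Pow by simp

lemma space_G: "space (gen_sigma M B n) = space M"
  unfolding gen_sigma_def Gen_def[symmetric] using Gen_Pow by simp

lemma dyadic_range: "i \<le> 2^n \<Longrightarrow> dyadic n i \<in> {0..1}"
  unfolding dyadic_def by (auto simp: field_simps)

lemma Gen_sets: "Gen n \<subseteq> sets M"
proof
  fix X assume "X \<in> Gen n"
  then obtain i A where "X = B (dyadic n i) -` A \<inter> space M" "i \<le> 2^n" "A \<in> sets borel" unfolding Gen_def by blast
  then show "X \<in> sets M" using Bmeas[OF dyadic_range] by (simp add: measurable_sets)
qed

lemma subalg_G: "subalgebra M (gen_sigma M B n)"
  unfolding subalgebra_def space_G sets_G using sets.sigma_sets_subset[OF Gen_sets] by simp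

lemma Bdy_meas_G: "i \<le> 2^n \<Longrightarrow> B (dyadic n i) \<in> borel_measurable (gen_sigma M B n)"
proof (rule measurableI)
  fix A :: "real set" assume i: "i \<le> 2^n" and A: "A \<in> sets borel"
  have "B (dyadic n i) -` A \<inter> space M \<in> Gen n" unfolding Gen_def using i A by blast
  then show "B (dyadic n i) -` A \<inter> space (gen_sigma M B n) \<in> sets (gen_sigma M B n)"
    unfolding space_G sets_G by auto
qed simp

lemma pN_meas_G: "i \<in> {..2^n} \<Longrightarrow> B (pN n i) \<in> borel_measurable (gen_sigma M B n)"
  unfolding pN_def using Bdy_meas_G[of "min i (2^n)" n] by simp

lemma Epi_Pow: "Epi n \<subseteq> Pow (space M)" unfolding Epi_def by auto

lemma EpiI: "\<forall>i\<in>{..2^n}. Bs i \<in> sets borel \<Longrightarrow> X = {\<omega> \<in> space M. \<forall>i\<in>{..2^n}. B (pN n i) \<omega> \<in> Bs i} \<Longrightarrow> X \<in> Epi n"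
  unfolding Epi_def by (rule CollectI, rule exI[where x=Bs]) simp

lemma EpiE: "X \<in> Epi n \<Longrightarrow> \<exists>Bs. X = {\<omega> \<in> space M. \<forall>i\<in>{..2^n}. B (pN n i) \<omega> \<in> Bs i} \<and> (\<forall>i\<in>{..2^n}. Bs i \<in> sets borel)"
  unfolding Epi_def by simp

lemma Epi_top: "space M \<in> Epi n"
  by (rule EpiI[where Bs="\<lambda>_. UNIV"]) simp_all

lemma Epi_Int: "Int_stable (Epi n)"
proof (rule Int_stableI)
  fix a b assume A: "a \<in> Epi n" and Bb: "b \<in> Epi n"
  obtain Bs where a: "a = {\<omega> \<in> space M. \<forall>i\<in>{..2^n}. B (pN n i) \<omega> \<in> Bs i}" "\<forall>i\<in>{..2^n}. Bs i \<in> sets borel"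
    using EpiE[OF A] by blast
  obtain Bs' where b: "b = {\<omega> \<in> space M. \<forall>i\<in>{..2^n}. B (pN n i) \<omega> \<in> Bs' i}" "\<forall>i\<in>{..2^n}. Bs' i \<in> sets borel"
    using EpiE[OF Bb] by blast
  have "a \<inter> b = {\<omega> \<in> space M. \<forall>i\<in>{..2^n}. B (pN n i) \<omega> \<in> (\<lambda>i. Bs i \<inter> Bs' i) i}"
    unfolding a(1) b(1) by blast
  moreover have "\<forall>i\<in>{..2^n}. (\<lambda>i. Bs i \<inter> Bs' i) i \<in> sets borel" using a(2) b(2) by auto
  ultimately show "a \<inter> b \<in> Epi n" by (intro EpiI)
qed

lemma sets_G_Epi: "sets (gen_sigma M B n) = sigma_sets (space M) (Epi n)"
proof
  show "sets (gen_sigma M B n) \<subseteq> sigma_sets (space M) (Epi n)"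
    unfolding sets_G
  proof (rule sigma_sets_mono')
    show "Gen n \<subseteq> Epi n"
    proof
      fix X assume "X \<in> Gen n"
      then obtain i A where X: "X = B (dyadic n i) -` A \<inter> space M" "i \<le> 2^n" "A \<in> sets borel" unfolding Gen_def by blast
      define Bs where "Bs j = (if j = i then A else UNIV)" for j
      have "X = {\<omega> \<in> space M. \<forall>j\<in>{..2^n}. B (pN n j) \<omega> \<in> Bs j}"
        using X unfolding Bs_def pN_def by auto
      moreover have "\<forall>j\<in>{..2^n}. Bs j \<in> sets borel" using X unfolding Bs_def by auto
      ultimately show "X \<in> Epi n" by (intro EpiI)
    qed
  qed
  show "sigma_sets (space M) (Epi n) \<subseteq> sets (gen_sigma M B n)"
  proof -
    have "Epi n \<subseteq> sets (gen_sigma M B n)"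
    proof
      fix X assume "X \<in> Epi n"
      then obtain Bs where X: "X = {\<omega> \<in> space M. \<forall>i\<in>{..2^n}. B (pN n i) \<omega> \<in> Bs i}" "\<forall>i\<in>{..2^n}. Bs i \<in> sets borel"
        using EpiE by blast
      have "X = (\<Inter>i\<in>{..2^n}. B (pN n i) -` Bs i \<inter> space (gen_sigma M B n))"
        unfolding X space_G by auto
      also have "\<dots> \<in> sets (gen_sigma M B n)"
        by (rule sets.finite_INT) (use X(2) pN_meas_G in \<open>auto simp: measurable_sets\<close>)
      finally show "X \<in> sets (gen_sigma M B n)" .
    qed
    then show ?thesis using sets.sigma_sets_subset[of "Epi n" "gen_sigma M B n"] unfolding space_G by simp
  qed
qed

end


lemma setint_nn:
  fixes f :: "'a \<Rightarrow> real"
  assumes fm: "f \<in> borel_measurable M" and nn: "\<And>x. 0 \<le> f x" and A: "A \<in> sets M"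
  shows "(\<integral>x\<in>A. f x \<partial>M) = enn2real (\<integral>\<^sup>+x. ennreal (f x) * indicator A x \<partial>M)"
proof -
  have "(\<integral>x\<in>A. f x \<partial>M) = (\<integral>x. indicator A x * f x \<partial>M)" unfolding set_lebesgue_integral_def by simp
  also have "\<dots> = enn2real (\<integral>\<^sup>+x. ennreal (indicator A x * f x) \<partial>M)"
  proof (rule integral_eq_nn_integral)
    show "(\<lambda>x. indicator A x * f x) \<in> borel_measurable M"
      by (intro borel_measurable_times borel_measurable_indicator A fm)
    show "AE x in M. 0 \<le> indicator A x * f x" using nn by simp
  qed
  also have "(\<integral>\<^sup>+x. ennreal (indicator A x * f x) \<partial>M) = (\<integral>\<^sup>+x. ennreal (f x) * indicator A x \<partial>M)"
    by (rule nn_integral_cong) (simp add: indicator_def)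
  finally show ?thesis .
qed

context fbm_ctx
begin

lemma indep_G:
  fixes f g :: "'a \<Rightarrow> ennreal"
  assumes fm: "f \<in> borel_measurable M" and gm: "g \<in> borel_measurable M"
    and H: "\<And>s. (\<integral>\<^sup>+\<omega>. f \<omega> * ennreal (exp (Zs (pN n) s {..2^n} \<omega>)) \<partial>M) = (\<integral>\<^sup>+\<omega>. g \<omega> * ennreal (exp (Zs (pN n) s {..2^n} \<omega>)) \<partial>M)"
    and Hfin: "\<And>s. (\<integral>\<^sup>+\<omega>. f \<omega> * ennreal (exp (Zs (pN n) s {..2^n} \<omega>)) \<partial>M) < \<infinity>"
    and A: "A \<in> sets (gen_sigma M B n)"
  shows "(\<integral>\<^sup>+\<omega>. f \<omega> * indicator A \<omega> \<partial>M) = (\<integral>\<^sup>+\<omega>. g \<omega> * indicator A \<omega> \<partial>M)"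
proof -
  define V where "V i = B (pN n i)" for i
  define I where "I = {..(2::nat)^n}"
  have Vm: "V i \<in> borel_measurable M" for i unfolding V_def by (rule Bmeas[OF pN_range])
  have Lf0: "Lf M V I h {} (\<lambda>_. UNIV) s = (\<integral>\<^sup>+\<omega>. h \<omega> * ennreal (exp (Zs (pN n) s {..2^n} \<omega>)) \<partial>M)" for h s
    unfolding Lf_def Zs_def V_def I_def by simp
  have UA: "\<forall>Bs s. (\<forall>i\<in>I. Bs i \<in> sets borel) \<longrightarrow> Lf M V I f I Bs s = Lf M V I g I Bs s \<and> Lf M V I f I Bs s < \<infinity>"
  proof (rule U_aux[OF Vm fm gm _ _ _ _ subset_refl])
    show "finite I" by (simp add: I_def)
    show "Lf M V I f {} (\<lambda>_. UNIV) s = Lf M V I g {} (\<lambda>_. UNIV) s" for s by (simp only: Lf0 H)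
    show "Lf M V I f {} (\<lambda>_. UNIV) s < \<infinity>" for s by (simp only: Lf0 Hfin)
  qed (simp add: I_def)
  have LfI: "Lf M V I h I Bs s = (\<integral>\<^sup>+\<omega>. h \<omega> * indicator {\<omega>\<in>space M. \<forall>i\<in>I. V i \<omega> \<in> Bs i} \<omega> \<partial>M)" for h Bs s
    unfolding Lf_def
  proof (rule nn_integral_cong)
    fix \<omega> assume "\<omega> \<in> space M"
    then show "h \<omega> * (\<Prod>i\<in>I. indicator (Bs i) (V i \<omega>)) * ennreal (exp (\<Sum>i\<in>I - I. s i * V i \<omega>)) =
      h \<omega> * indicator {\<omega> \<in> space M. \<forall>i\<in>I. V i \<omega> \<in> Bs i} \<omega>"
      using prod_indicator_ennreal[of I Bs V \<omega>] unfolding I_def by (simp add: indicator_def)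
  qed
  have eqE: "(\<integral>\<^sup>+\<omega>. f \<omega> * indicator C \<omega> \<partial>M) = (\<integral>\<^sup>+\<omega>. g \<omega> * indicator C \<omega> \<partial>M)" if CE: "C \<in> Epi n" for C
  proof -
    obtain Bs where C: "C = {\<omega> \<in> space M. \<forall>i\<in>{..2^n}. B (pN n i) \<omega> \<in> Bs i}" "\<forall>i\<in>{..2^n}. Bs i \<in> sets borel"
      using EpiE[OF CE] by blast
    have e: "C = {\<omega>\<in>space M. \<forall>i\<in>I. V i \<omega> \<in> Bs i}" unfolding C(1) V_def I_def ..
    have BI: "\<And>i. i \<in> I \<Longrightarrow> Bs i \<in> sets borel" using C(2) by (simp add: I_def)
    have "Lf M V I f I Bs (\<lambda>_. 0) = Lf M V I g I Bs (\<lambda>_. 0)" using UA[rule_format, OF BI] by (rule conjunct1)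
    then show ?thesis unfolding LfI e[symmetric] .
  qed
  have fin: "(\<integral>\<^sup>+\<omega>. f \<omega> \<partial>M) < \<infinity>"
    using Hfin[of "\<lambda>_. 0"] unfolding Zs_def by simp
  show ?thesis
    by (rule ext_pi[OF Epi_Int Epi_Pow sets_G_Epi Epi_top subalg_G fm gm eqE fin A])
qed

end


context fbm_ctx
begin

lemma sfs: "sigma_finite_subalgebra M (gen_sigma M B n)"
proof -
  have "finite_measure_subalgebra M (gen_sigma M B n)"
    unfolding finite_measure_subalgebra_def finite_measure_subalgebra_axioms_def
    using subalg_G finite_measureI[of M] emeasure_space_1 by simp
  then show ?thesis by (rule finite_measure_subalgebra_is_sigma_finite)
qed

lemma E2_scale_both: "E2 (\<lambda>\<omega>. t * Y \<omega>) (\<lambda>\<omega>. t * Y \<omega>) = t\<^sup>2 * E2 Y Y"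
  using E2_scale_left[of t Y "\<lambda>\<omega>. t * Y \<omega>"] E2_scale_right[of Y t Y] by (simp add: power2_eq_square)

lemma L_meas_G: "Zs (pN n) cc {..2^n} \<in> borel_measurable (gen_sigma M B n)"
proof -
  have "(\<lambda>\<omega>. \<Sum>i\<in>{..2^n}. cc i * B (pN n i) \<omega>) \<in> borel_measurable (gen_sigma M B n)"
  proof (rule borel_measurable_sum)
    fix i :: nat assume "i \<in> {..2^n}"
    then show "(\<lambda>\<omega>. cc i * B (pN n i) \<omega>) \<in> borel_measurable (gen_sigma M B n)"
      by (intro borel_measurable_times borel_measurable_const pN_meas_G)
  qed
  then show ?thesis unfolding Zs_def[abs_def] .
qed

lemma cond_exp_main:
  fixes X :: "'a \<Rightarrow> real" and cc :: "nat \<Rightarrow> real" and \<theta> :: real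
  assumes X: "lin X"
    and orth: "\<And>j. j \<in> {..2^n} \<Longrightarrow> E2 (\<lambda>\<omega>. X \<omega> - Zs (pN n) cc {..2^n} \<omega>) (B (pN n j)) = 0"
  shows "AE \<omega> in M. real_cond_exp M (gen_sigma M B n) (\<lambda>\<omega>. exp (\<theta> * X \<omega>)) \<omega> =
     exp (\<theta>\<^sup>2 * E2 (\<lambda>\<omega>. X \<omega> - Zs (pN n) cc {..2^n} \<omega>) (\<lambda>\<omega>. X \<omega> - Zs (pN n) cc {..2^n} \<omega>) / 2) * exp (\<theta> * Zs (pN n) cc {..2^n} \<omega>)"
proof -
  interpret S: sigma_finite_subalgebra M "gen_sigma M B n" by (rule sfs)
  define I where "I = {..(2::nat)^n}"
  define L where "L = Zs (pN n) cc I"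
  define Y where "Y = (\<lambda>\<omega>. X \<omega> - L \<omega>)"
  have fI: "finite I" unfolding I_def by simp
  have p: "\<And>i. pN n i \<in> {0..1}" by (rule pN_range)
  have lL: "lin L" unfolding L_def by (rule lin_Zs[OF fI p])
  have lY: "lin Y" unfolding Y_def by (rule lin_diff[OF X lL])
  have orthY: "\<And>j. j \<in> I \<Longrightarrow> E2 Y (B (pN n j)) = 0" using orth unfolding Y_def I_def L_def by simp
  define c\<theta> where "c\<theta> = (\<integral>\<omega>. exp (\<theta> * Y \<omega>) \<partial>M)"
  have c\<theta>_val: "c\<theta> = exp (\<theta>\<^sup>2 * E2 Y Y / 2)"
    unfolding c\<theta>_def using lin_mgf(2)[OF lin_scale[OF lY, of \<theta>]] E2_scale_both by simp
  have c\<theta>_nn: "0 \<le> c\<theta>" unfolding c\<theta>_val by simp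
  have Zlin: "\<theta> * L \<omega> + Zs (pN n) s I \<omega> = Zs (pN n) (\<lambda>i. \<theta> * cc i + s i) I \<omega>" for s \<omega>
    unfolding L_def Zs_def sum_distrib_left sum.distrib[symmetric] by (rule sum.cong) (simp_all add: algebra_simps)
  have XYL: "\<theta> * X \<omega> + Zs (pN n) s I \<omega> = \<theta> * Y \<omega> + Zs (pN n) (\<lambda>i. \<theta> * cc i + s i) I \<omega>" for s \<omega>
    using Zlin[of \<omega> s] unfolding Y_def by (simp add: algebra_simps)
  have Xm: "X \<in> borel_measurable M" by (rule lin_meas[OF X])
  have Lm: "L \<in> borel_measurable M" by (rule lin_meas[OF lL])
  define f where "f \<omega> = ennreal (exp (\<theta> * X \<omega>))" for \<omega>
  define g where "g \<omega> = ennreal (c\<theta> * exp (\<theta> * L \<omega>))" for \<omega>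
  have fm: "f \<in> borel_measurable M" unfolding f_def using Xm by measurable
  have gm: "g \<in> borel_measurable M" unfolding g_def using Lm by measurable
  have lZ: "lin (Zs (pN n) s I)" for s by (rule lin_Zs[OF fI p])
  have Hf: "(\<integral>\<^sup>+\<omega>. f \<omega> * ennreal (exp (Zs (pN n) s I \<omega>)) \<partial>M) = ennreal (c\<theta> * (\<integral>\<omega>. exp (Zs (pN n) (\<lambda>i. \<theta> * cc i + s i) I \<omega>) \<partial>M))" for s
  proof -
    have "(\<integral>\<^sup>+\<omega>. f \<omega> * ennreal (exp (Zs (pN n) s I \<omega>)) \<partial>M) = (\<integral>\<^sup>+\<omega>. ennreal (exp (\<theta> * Y \<omega> + Zs (pN n) (\<lambda>i. \<theta> * cc i + s i) I \<omega>)) \<partial>M)"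
      by (rule nn_integral_cong) (simp add: f_def XYL[symmetric] exp_add ennreal_mult)
    also have "\<dots> = ennreal (\<integral>\<omega>. exp (\<theta> * Y \<omega> + Zs (pN n) (\<lambda>i. \<theta> * cc i + s i) I \<omega>) \<partial>M)"
      by (rule nn_integral_eq_integral) (use mgf_indep(1)[OF lY fI p orthY] in auto)
    also have "\<dots> = ennreal (c\<theta> * (\<integral>\<omega>. exp (Zs (pN n) (\<lambda>i. \<theta> * cc i + s i) I \<omega>) \<partial>M))"
      using mgf_indep(2)[OF lY fI p orthY, where t=\<theta> and s="\<lambda>i. \<theta> * cc i + s i"] by (simp add: c\<theta>_def)
    finally show ?thesis .
  qed
  have Hg: "(\<integral>\<^sup>+\<omega>. g \<omega> * ennreal (exp (Zs (pN n) s I \<omega>)) \<partial>M) = ennreal (c\<theta> * (\<integral>\<omega>. exp (Zs (pN n) (\<lambda>i. \<theta> * cc i + s i) I \<omega>) \<partial>M))" for s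
  proof -
    have "(\<integral>\<^sup>+\<omega>. g \<omega> * ennreal (exp (Zs (pN n) s I \<omega>)) \<partial>M) = (\<integral>\<^sup>+\<omega>. ennreal (c\<theta> * exp (Zs (pN n) (\<lambda>i. \<theta> * cc i + s i) I \<omega>)) \<partial>M)"
      by (rule nn_integral_cong) (simp add: g_def Zlin[symmetric] exp_add ennreal_mult c\<theta>_nn mult_ac)
    also have "\<dots> = ennreal (\<integral>\<omega>. c\<theta> * exp (Zs (pN n) (\<lambda>i. \<theta> * cc i + s i) I \<omega>) \<partial>M)"
      by (rule nn_integral_eq_integral) (use lin_mgf(1)[OF lZ] c\<theta>_nn in auto)
    finally show ?thesis by simp
  qed
  have eqA: "(\<integral>\<^sup>+\<omega>. f \<omega> * indicator A \<omega> \<partial>M) = (\<integral>\<^sup>+\<omega>. g \<omega> * indicator A \<omega> \<partial>M)"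
    if A: "A \<in> sets (gen_sigma M B n)" for A
    by (rule indep_G[OF fm gm _ _ A]) (simp_all add: I_def[symmetric] Hf Hg)
  have intX: "integrable M (\<lambda>\<omega>. exp (\<theta> * X \<omega>))" by (rule lin_mgf(1)[OF lin_scale[OF X]])
  have intL: "integrable M (\<lambda>\<omega>. c\<theta> * exp (\<theta> * L \<omega>))" using lin_mgf(1)[OF lin_scale[OF lL]] by simp
  have LG: "L \<in> borel_measurable (gen_sigma M B n)" unfolding L_def I_def by (rule L_meas_G)
  have gG: "(\<lambda>\<omega>. c\<theta> * exp (\<theta> * L \<omega>)) \<in> borel_measurable (gen_sigma M B n)" using LG by measurable
  have "AE \<omega> in M. real_cond_exp M (gen_sigma M B n) (\<lambda>\<omega>. exp (\<theta> * X \<omega>)) \<omega> = c\<theta> * exp (\<theta> * L \<omega>)"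
  proof (rule S.real_cond_exp_charact[OF _ intX intL gG])
    fix A assume A: "A \<in> sets (gen_sigma M B n)"
    then have AM: "A \<in> sets M" using subalg_G unfolding subalgebra_def by auto
    have "(\<integral>\<omega>\<in>A. exp (\<theta> * X \<omega>) \<partial>M) = enn2real (\<integral>\<^sup>+\<omega>. f \<omega> * indicator A \<omega> \<partial>M)"
      unfolding f_def by (rule setint_nn[OF _ _ AM]) (use Xm in simp_all)
    also have "\<dots> = enn2real (\<integral>\<^sup>+\<omega>. g \<omega> * indicator A \<omega> \<partial>M)" using eqA[OF A] by simp
    also have "\<dots> = (\<integral>\<omega>\<in>A. c\<theta> * exp (\<theta> * L \<omega>) \<partial>M)"
      unfolding g_def by (rule setint_nn[OF _ _ AM, symmetric]) (use Lm c\<theta>_nn in simp_all)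
    finally show "(\<integral>\<omega>\<in>A. exp (\<theta> * X \<omega>) \<partial>M) = (\<integral>\<omega>\<in>A. c\<theta> * exp (\<theta> * L \<omega>) \<partial>M)" .
  qed
  then show ?thesis unfolding c\<theta>_val Y_def L_def I_def by simp
qed

end


context fbm_ctx
begin

lemma cond_exp_lin:
  fixes X :: "'a \<Rightarrow> real" and cc :: "nat \<Rightarrow> real"
  assumes X: "lin X"
    and orth: "\<And>j. j \<in> {..2^n} \<Longrightarrow> E2 (\<lambda>\<omega>. X \<omega> - Zs (pN n) cc {..2^n} \<omega>) (B (pN n j)) = 0"
  shows "AE \<omega> in M. real_cond_exp M (gen_sigma M B n) X \<omega> = Zs (pN n) cc {..2^n} \<omega>"
proof -
  interpret S: sigma_finite_subalgebra M "gen_sigma M B n" by (rule sfs)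
  define I where "I = {..(2::nat)^n}"
  define L where "L = Zs (pN n) cc I"
  define Y where "Y = (\<lambda>\<omega>. X \<omega> - L \<omega>)"
  have fI: "finite I" unfolding I_def by simp
  have p: "\<And>i. pN n i \<in> {0..1}" by (rule pN_range)
  have lL: "lin L" unfolding L_def by (rule lin_Zs[OF fI p])
  have lY: "lin Y" unfolding Y_def by (rule lin_diff[OF X lL])
  have orthY: "\<And>j. j \<in> I \<Longrightarrow> E2 Y (B (pN n j)) = 0" using orth unfolding Y_def I_def L_def by simp
  have Ym[measurable]: "Y \<in> borel_measurable M" by (rule lin_meas[OF lY])
  have lZ: "lin (Zs (pN n) s I)" for s by (rule lin_Zs[OF fI p])
  define c where "c t = (\<integral>\<omega>. exp (t * Y \<omega>) \<partial>M)" for t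
  have c_nn: "0 \<le> c t" for t unfolding c_def by simp
  have indepY: "(\<integral>\<^sup>+\<omega>. ennreal (exp (t * Y \<omega>)) * indicator A \<omega> \<partial>M) = ennreal (c t) * emeasure M A"
    if A: "A \<in> sets (gen_sigma M B n)" for A t
  proof -
    have AM: "A \<in> sets M" using A subalg_G unfolding subalgebra_def by auto
    have H1: "(\<integral>\<^sup>+\<omega>. ennreal (exp (t * Y \<omega>)) * ennreal (exp (Zs (pN n) s I \<omega>)) \<partial>M) = ennreal (c t * (\<integral>\<omega>. exp (Zs (pN n) s I \<omega>) \<partial>M))" for s
    proof -
      have "(\<integral>\<^sup>+\<omega>. ennreal (exp (t * Y \<omega>)) * ennreal (exp (Zs (pN n) s I \<omega>)) \<partial>M) = (\<integral>\<^sup>+\<omega>. ennreal (exp (t * Y \<omega> + Zs (pN n) s I \<omega>)) \<partial>M)"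
        by (rule nn_integral_cong) (simp add: exp_add ennreal_mult)
      also have "\<dots> = ennreal (\<integral>\<omega>. exp (t * Y \<omega> + Zs (pN n) s I \<omega>) \<partial>M)"
        by (rule nn_integral_eq_integral) (use mgf_indep(1)[OF lY fI p orthY] in auto)
      also have "\<dots> = ennreal (c t * (\<integral>\<omega>. exp (Zs (pN n) s I \<omega>) \<partial>M))"
        using mgf_indep(2)[OF lY fI p orthY, where t=t and s=s] by (simp add: c_def)
      finally show ?thesis .
    qed
    have H2: "(\<integral>\<^sup>+\<omega>. ennreal (c t) * ennreal (exp (Zs (pN n) s I \<omega>)) \<partial>M) = ennreal (c t * (\<integral>\<omega>. exp (Zs (pN n) s I \<omega>) \<partial>M))" for s
    proof -
      have "(\<integral>\<^sup>+\<omega>. ennreal (c t) * ennreal (exp (Zs (pN n) s I \<omega>)) \<partial>M) = (\<integral>\<^sup>+\<omega>. ennreal (c t * exp (Zs (pN n) s I \<omega>)) \<partial>M)"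
        by (rule nn_integral_cong) (simp add: ennreal_mult c_nn)
      also have "\<dots> = ennreal (\<integral>\<omega>. c t * exp (Zs (pN n) s I \<omega>) \<partial>M)"
        by (rule nn_integral_eq_integral) (use lin_mgf(1)[OF lZ] c_nn in auto)
      finally show ?thesis by simp
    qed
    have "(\<integral>\<^sup>+\<omega>. ennreal (exp (t * Y \<omega>)) * indicator A \<omega> \<partial>M) = (\<integral>\<^sup>+\<omega>. ennreal (c t) * indicator A \<omega> \<partial>M)"
      by (rule indep_G[OF _ _ _ _ A]) (simp_all add: I_def[symmetric] H1 H2)
    also have "\<dots> = ennreal (c t) * emeasure M A" by (rule nn_integral_cmult_indicator[OF AM])
    finally show ?thesis .
  qed
  have setY: "(\<integral>\<omega>\<in>A. Y \<omega> \<partial>M) = 0" if A: "A \<in> sets (gen_sigma M B n)" for A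
  proof -
    have AM[measurable]: "A \<in> sets M" using A subalg_G unfolding subalgebra_def by auto
    define \<nu>1 where "\<nu>1 = distr (density M (indicator A)) borel Y"
    define \<nu>2 where "\<nu>2 = distr (density M (\<lambda>_. emeasure M A)) borel Y"
    have n1: "(\<integral>\<^sup>+y. h y \<partial>\<nu>1) = (\<integral>\<^sup>+\<omega>. h (Y \<omega>) * indicator A \<omega> \<partial>M)" if [measurable]: "h \<in> borel_measurable borel" for h
    proof -
      have "(\<integral>\<^sup>+y. h y \<partial>\<nu>1) = (\<integral>\<^sup>+\<omega>. h (Y \<omega>) \<partial>density M (indicator A))"
        unfolding \<nu>1_def by (rule nn_integral_distr) simp_all
      also have "\<dots> = (\<integral>\<^sup>+\<omega>. indicator A \<omega> * h (Y \<omega>) \<partial>M)"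
        by (rule nn_integral_density) simp_all
      finally show ?thesis by (simp add: mult.commute)
    qed
    have n2: "(\<integral>\<^sup>+y. h y \<partial>\<nu>2) = emeasure M A * (\<integral>\<^sup>+\<omega>. h (Y \<omega>) \<partial>M)" if [measurable]: "h \<in> borel_measurable borel" for h
    proof -
      have "(\<integral>\<^sup>+y. h y \<partial>\<nu>2) = (\<integral>\<^sup>+\<omega>. h (Y \<omega>) \<partial>density M (\<lambda>_. emeasure M A))"
        unfolding \<nu>2_def by (rule nn_integral_distr) simp_all
      also have "\<dots> = (\<integral>\<^sup>+\<omega>. emeasure M A * h (Y \<omega>) \<partial>M)"
        by (rule nn_integral_density) simp_all
      also have "\<dots> = emeasure M A * (\<integral>\<^sup>+\<omega>. h (Y \<omega>) \<partial>M)"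
        by (rule nn_integral_cmult) simp
      finally show ?thesis .
    qed
    have eY: "(\<integral>\<^sup>+\<omega>. ennreal (exp (t * Y \<omega>)) \<partial>M) = ennreal (c t)" for t
      unfolding c_def by (rule nn_integral_eq_integral) (use lin_mgf(1)[OF lin_scale[OF lY]] in auto)
    have "\<nu>1 = \<nu>2"
    proof (rule mgf_unique_fin)
      show "sets \<nu>1 = sets borel" "sets \<nu>2 = sets borel" unfolding \<nu>1_def \<nu>2_def by simp_all
      have mexp: "(\<lambda>x::real. ennreal (exp (t * x))) \<in> borel_measurable borel" for t by measurable
      show "(\<integral>\<^sup>+x. ennreal (exp (t * x)) \<partial>\<nu>1) < \<infinity>" for t
        unfolding n1[OF mexp] indepY[OF A] using emeasure_finite[of A] by (simp add: ennreal_mult_eq_top_iff less_top[symmetric])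
      show "(\<integral>\<^sup>+x. ennreal (exp (t * x)) \<partial>\<nu>1) = (\<integral>\<^sup>+x. ennreal (exp (t * x)) \<partial>\<nu>2)" for t
        unfolding n1[OF mexp] n2[OF mexp] indepY[OF A] eY by (simp add: mult.commute)
    qed
    then have eqp: "(\<integral>\<^sup>+\<omega>. ennreal (Y \<omega>) * indicator A \<omega> \<partial>M) = emeasure M A * (\<integral>\<^sup>+\<omega>. ennreal (Y \<omega>) \<partial>M)"
      and eqn: "(\<integral>\<^sup>+\<omega>. ennreal (- Y \<omega>) * indicator A \<omega> \<partial>M) = emeasure M A * (\<integral>\<^sup>+\<omega>. ennreal (- Y \<omega>) \<partial>M)"
      using n1[of "\<lambda>y. ennreal y"] n2[of "\<lambda>y. ennreal y"] n1[of "\<lambda>y. ennreal (- y)"] n2[of "\<lambda>y. ennreal (- y)"] by simp_all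
    have iY: "integrable M Y" by (rule lin_int(1)[OF lY])
    have iAY: "integrable M (\<lambda>\<omega>. indicator A \<omega> * Y \<omega>)"
      using integrable_mult_indicator[OF AM iY] by simp
    have "(\<integral>\<omega>\<in>A. Y \<omega> \<partial>M) = (\<integral>\<omega>. indicator A \<omega> * Y \<omega> \<partial>M)" unfolding set_lebesgue_integral_def by simp
    also have "\<dots> = enn2real (\<integral>\<^sup>+\<omega>. ennreal (indicator A \<omega> * Y \<omega>) \<partial>M) - enn2real (\<integral>\<^sup>+\<omega>. ennreal (- (indicator A \<omega> * Y \<omega>)) \<partial>M)"
      by (rule real_lebesgue_integral_def[OF iAY])
    also have "(\<integral>\<^sup>+\<omega>. ennreal (indicator A \<omega> * Y \<omega>) \<partial>M) = (\<integral>\<^sup>+\<omega>. ennreal (Y \<omega>) * indicator A \<omega> \<partial>M)"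
      by (rule nn_integral_cong) (simp add: indicator_def)
    also have "(\<integral>\<^sup>+\<omega>. ennreal (- (indicator A \<omega> * Y \<omega>)) \<partial>M) = (\<integral>\<^sup>+\<omega>. ennreal (- Y \<omega>) * indicator A \<omega> \<partial>M)"
      by (rule nn_integral_cong) (simp add: indicator_def)
    also have "enn2real (\<integral>\<^sup>+\<omega>. ennreal (Y \<omega>) * indicator A \<omega> \<partial>M) - enn2real (\<integral>\<^sup>+\<omega>. ennreal (- Y \<omega>) * indicator A \<omega> \<partial>M)
        = measure M A * (enn2real (\<integral>\<^sup>+\<omega>. ennreal (Y \<omega>) \<partial>M) - enn2real (\<integral>\<^sup>+\<omega>. ennreal (- Y \<omega>) \<partial>M))"
      unfolding eqp eqn by (simp add: enn2real_mult measure_def right_diff_distrib)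
    also have "enn2real (\<integral>\<^sup>+\<omega>. ennreal (Y \<omega>) \<partial>M) - enn2real (\<integral>\<^sup>+\<omega>. ennreal (- Y \<omega>) \<partial>M) = integral\<^sup>L M Y"
      by (rule real_lebesgue_integral_def[OF iY, symmetric])
    also have "integral\<^sup>L M Y = 0" by (rule lin_int(2)[OF lY])
    finally show ?thesis by simp
  qed
  have iX: "integrable M X" by (rule lin_int(1)[OF X])
  have iL: "integrable M L" by (rule lin_int(1)[OF lL])
  have iY: "integrable M Y" by (rule lin_int(1)[OF lY])
  have LG: "L \<in> borel_measurable (gen_sigma M B n)" unfolding L_def I_def by (rule L_meas_G)
  have "AE \<omega> in M. real_cond_exp M (gen_sigma M B n) X \<omega> = L \<omega>"
  proof (rule S.real_cond_exp_charact[OF _ iX iL LG])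
    fix A assume A: "A \<in> sets (gen_sigma M B n)"
    then have AM: "A \<in> sets M" using subalg_G unfolding subalgebra_def by auto
    have "(\<integral>\<omega>\<in>A. X \<omega> \<partial>M) = (\<integral>\<omega>. indicator A \<omega> * Y \<omega> + indicator A \<omega> * L \<omega> \<partial>M)"
      unfolding set_lebesgue_integral_def Y_def by (simp add: algebra_simps)
    also have "\<dots> = (\<integral>\<omega>. indicator A \<omega> * Y \<omega> \<partial>M) + (\<integral>\<omega>. indicator A \<omega> * L \<omega> \<partial>M)"
      using integrable_mult_indicator[OF AM iY] integrable_mult_indicator[OF AM iL] by simp
    also have "(\<integral>\<omega>. indicator A \<omega> * Y \<omega> \<partial>M) = 0" using setY[OF A] unfolding set_lebesgue_integral_def by simp
    finally show "(\<integral>\<omega>\<in>A. X \<omega> \<partial>M) = (\<integral>\<omega>\<in>A. L \<omega> \<partial>M)" unfolding set_lebesgue_integral_def by simp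
  qed
  then show ?thesis unfolding L_def I_def .
qed

end


context fbm_ctx
begin

definition Kf :: "real \<Rightarrow> real \<Rightarrow> real" where
  "Kf s t = (\<bar>s\<bar> powr (2*H) + \<bar>t\<bar> powr (2*H) - \<bar>s - t\<bar> powr (2*H)) / 2"

lemma var_X:
  assumes a: "a \<in> {0..1}" and b: "b \<in> {0..1}" and c: "c \<in> {0..1}"
  shows "E2 (\<lambda>\<omega>. 1/2 * B a \<omega> - B b \<omega> + 1/2 * B c \<omega>) (\<lambda>\<omega>. 1/2 * B a \<omega> - B b \<omega> + 1/2 * B c \<omega>) =
    1/4 * Kf a a + Kf b b + 1/4 * Kf c c - Kf a b - Kf b c + 1/2 * Kf a c"
proof -
  have i: "integrable M (\<lambda>\<omega>. B s \<omega> * B t \<omega>)" if "s \<in> {a,b,c}" "t \<in> {a,b,c}" for s t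
    using that a b c by (intro Bprod(1)) auto
  have v: "(\<integral>\<omega>. B s \<omega> * B t \<omega> \<partial>M) = Kf s t" if "s \<in> {a,b,c}" "t \<in> {a,b,c}" for s t
    unfolding Kf_def using that a b c by (intro Bprod(2)) auto
  have e: "(1/2 * B a \<omega> - B b \<omega> + 1/2 * B c \<omega>) * (1/2 * B a \<omega> - B b \<omega> + 1/2 * B c \<omega>) =
    1/4 * (B a \<omega> * B a \<omega>) + (B b \<omega> * B b \<omega>) + 1/4 * (B c \<omega> * B c \<omega>) - (B a \<omega> * B b \<omega>) - (B b \<omega> * B c \<omega>) + 1/2 * (B a \<omega> * B c \<omega>)" for \<omega>
    by (simp add: algebra_simps)
  have "E2 (\<lambda>\<omega>. 1/2 * B a \<omega> - B b \<omega> + 1/2 * B c \<omega>) (\<lambda>\<omega>. 1/2 * B a \<omega> - B b \<omega> + 1/2 * B c \<omega>) =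
     (\<integral>\<omega>. 1/4 * (B a \<omega> * B a \<omega>) + (B b \<omega> * B b \<omega>) + 1/4 * (B c \<omega> * B c \<omega>) - (B a \<omega> * B b \<omega>) - (B b \<omega> * B c \<omega>) + 1/2 * (B a \<omega> * B c \<omega>) \<partial>M)"
    unfolding E2_def e ..
  also have "\<dots> = 1/4 * (\<integral>\<omega>. B a \<omega> * B a \<omega> \<partial>M) + (\<integral>\<omega>. B b \<omega> * B b \<omega> \<partial>M) + 1/4 * (\<integral>\<omega>. B c \<omega> * B c \<omega> \<partial>M)
      - (\<integral>\<omega>. B a \<omega> * B b \<omega> \<partial>M) - (\<integral>\<omega>. B b \<omega> * B c \<omega> \<partial>M) + 1/2 * (\<integral>\<omega>. B a \<omega> * B c \<omega> \<partial>M)"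
    using i[of a a] i[of b b] i[of c c] i[of a b] i[of b c] i[of a c] by simp
  also have "\<dots> = 1/4 * Kf a a + Kf b b + 1/4 * Kf c c - Kf a b - Kf b c + 1/2 * Kf a c"
    using v[of a a] v[of b b] v[of c c] v[of a b] v[of b c] v[of a c] by simp
  finally show ?thesis .
qed

lemma var_bound:
  fixes N k :: nat
  assumes k: "1 \<le> k" "2 * k \<le> 2^N"
  defines "a \<equiv> dyadic N (2*k-2)" and "b \<equiv> dyadic N (2*k-1)" and "c \<equiv> dyadic N (2*k)"
  shows "E2 (\<lambda>\<omega>. 1/2 * B a \<omega> - B b \<omega> + 1/2 * B c \<omega>) (\<lambda>\<omega>. 1/2 * B a \<omega> - B b \<omega> + 1/2 * B c \<omega>) \<le> 2 powr (- 2 * real N * H)"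
proof -
  define h :: real where "h = 1 / 2^N"
  have h0: "0 < h" unfolding h_def by simp
  have ra: "a = (2 * real k - 2) * h" unfolding a_def h_def dyadic_def using k by (simp add: of_nat_diff)
  have rb: "b = (2 * real k - 1) * h" unfolding b_def h_def dyadic_def using k by (simp add: of_nat_diff)
  have rc: "c = (2 * real k) * h" unfolding c_def h_def dyadic_def by simp
  have ar: "a \<in> {0..1}" unfolding a_def using k by (intro dyadic_range) simp
  have br: "b \<in> {0..1}" unfolding b_def using k by (intro dyadic_range) simp
  have cr: "c \<in> {0..1}" unfolding c_def using k by (intro dyadic_range) simp
  have ab: "\<bar>a - b\<bar> = h" and bc: "\<bar>b - c\<bar> = h" and ac: "\<bar>a - c\<bar> = 2 * h"
    using h0 unfolding ra rb rc by (simp_all add: algebra_simps)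
  have kxx: "Kf x x = \<bar>x\<bar> powr (2*H)" for x unfolding Kf_def by simp
  have "E2 (\<lambda>\<omega>. 1/2 * B a \<omega> - B b \<omega> + 1/2 * B c \<omega>) (\<lambda>\<omega>. 1/2 * B a \<omega> - B b \<omega> + 1/2 * B c \<omega>) =
      h powr (2*H) - (2*h) powr (2*H) / 4"
    unfolding var_X[OF ar br cr] kxx unfolding Kf_def ab bc ac by (simp add: field_simps)
  also have "\<dots> \<le> h powr (2*H)" by simp
  also have "h powr (2*H) = 2 powr (- 2 * real N * H)"
  proof -
    have hh: "h = 2 powr (- real N)" unfolding h_def by (simp add: powr_minus powr_realpow divide_inverse)
    have "h powr (2*H) = 2 powr (- real N * (2*H))" unfolding hh by (rule powr_powr)
    also have "- real N * (2*H) = - 2 * real N * H" by (simp add: algebra_simps)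
    finally show ?thesis .
  qed
  finally show ?thesis .
qed

end


context fbm_ctx
begin

lemma main:
  fixes \<delta> \<rho> \<theta> :: real and n m k :: nat
  assumes m: "1 \<le> m" and k1: "1 \<le> k" and k2: "k \<le> 2 ^ (n+m-1)" and th: "0 < \<theta>"
  shows "AE \<omega> in M. BCE M B H \<delta> \<rho> n \<omega> \<longrightarrow>
           Xi M B n m k \<theta> \<omega> \<le>
             exp ((\<rho> * ell H \<delta> (n+m) * \<theta> + \<theta>\<^sup>2 * 2 powr (- 2 * real (n+m) * H)) / 2)"
proof -
  interpret S: sigma_finite_subalgebra M "gen_sigma M B n" by (rule sfs)
  define a where "a = dyadic (n+m) (2*k-2)"
  define b where "b = dyadic (n+m) (2*k-1)"
  define c where "c = dyadic (n+m) (2*k)"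
  have kk: "2 * k \<le> 2^(n+m)"
  proof -
    have "2^(n+m) = 2 * (2::nat)^(n+m-1)" using m by (simp add: power_Suc[symmetric])
    then show ?thesis using k2 by simp
  qed
  have ar: "a \<in> {0..1}" unfolding a_def using kk by (intro dyadic_range) simp
  have br: "b \<in> {0..1}" unfolding b_def using kk by (intro dyadic_range) simp
  have cr: "c \<in> {0..1}" unfolding c_def using kk by (intro dyadic_range) simp
  define X where "X = (\<lambda>\<omega>. 1/2 * B a \<omega> - B b \<omega> + 1/2 * B c \<omega>)"
  have lX: "lin X" unfolding X_def
    by (rule lin_add[OF lin_diff[OF lin_scale[OF lin_B[OF ar]] lin_B[OF br]] lin_scale[OF lin_B[OF cr]]])
  obtain cc where orth0: "\<forall>j\<in>{..2^n}. E2 (\<lambda>\<omega>. X \<omega> - Zs (pN n) cc {..2^n} \<omega>) (B (pN n j)) = 0"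
    using projection[of "pN n", OF pN_range, of "{..2^n}"] lX by auto
  have orth: "\<And>j. j \<in> {..2^n} \<Longrightarrow> E2 (\<lambda>\<omega>. X \<omega> - Zs (pN n) cc {..2^n} \<omega>) (B (pN n j)) = 0"
    using orth0 by blast
  define L where "L = Zs (pN n) cc {..2^n}"
  define Y where "Y = (\<lambda>\<omega>. X \<omega> - L \<omega>)"
  define P where "P = 2 powr (- 2 * real (n+m) * H)"
  have lL: "lin L" unfolding L_def by (rule lin_Zs[OF _ pN_range]) simp
  have lY: "lin Y" unfolding Y_def by (rule lin_diff[OF lX lL])
  have YL: "E2 Y L = 0" unfolding L_def using E2_Zs_right[OF _ pN_range lY] orth unfolding Y_def L_def by simp
  have XYL: "X = (\<lambda>\<omega>. Y \<omega> + L \<omega>)" unfolding Y_def by simp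
  have VX: "E2 X X = E2 Y Y + E2 L L"
  proof -
    have lYL: "lin (\<lambda>\<omega>. Y \<omega> + L \<omega>)" by (rule lin_add[OF lY lL])
    have "E2 (\<lambda>\<omega>. Y \<omega> + L \<omega>) (\<lambda>\<omega>. Y \<omega> + L \<omega>) = E2 Y (\<lambda>\<omega>. Y \<omega> + L \<omega>) + E2 L (\<lambda>\<omega>. Y \<omega> + L \<omega>)"
      by (rule E2_add_left[OF lY lL lYL])
    also have "\<dots> = (E2 Y Y + E2 Y L) + (E2 L Y + E2 L L)"
      using E2_add_right[OF lY lY lL] E2_add_right[OF lL lY lL] by simp
    also have "E2 L Y = E2 Y L" by (rule E2_sym)
    finally show ?thesis using YL XYL by simp
  qed
  have VXP: "E2 X X \<le> P" unfolding X_def P_def a_def b_def c_def by (rule var_bound[OF k1 kk])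
  have VYP: "E2 Y Y \<le> P" using VX VXP E2_nonneg[of L] by linarith
  have AE1: "AE \<omega> in M. real_cond_exp M (gen_sigma M B n) (\<lambda>\<omega>. exp (\<theta> * X \<omega>)) \<omega> = exp (\<theta>\<^sup>2 * E2 Y Y / 2) * exp (\<theta> * L \<omega>)"
    using cond_exp_main[OF lX orth, of \<theta>] unfolding Y_def L_def .
  have AE2: "AE \<omega> in M. real_cond_exp M (gen_sigma M B n) X \<omega> = L \<omega>"
    using cond_exp_lin[OF lX orth] unfolding L_def .
  have iBa: "integrable M (B a)" "integrable M (B b)" "integrable M (B c)" using Bint(1) ar br cr by auto
  have iha: "integrable M (\<lambda>\<omega>. 1/2 * B a \<omega>)" "integrable M (\<lambda>\<omega>. 1/2 * B c \<omega>)" using iBa by auto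
  have iab: "integrable M (\<lambda>\<omega>. 1/2 * B a \<omega> - B b \<omega>)" using iha iBa by auto
  have AE3: "AE \<omega> in M. real_cond_exp M (gen_sigma M B n) X \<omega> = mu_cond M B n m k \<omega>"
  proof -
    have e1: "AE \<omega> in M. real_cond_exp M (gen_sigma M B n) X \<omega> =
        real_cond_exp M (gen_sigma M B n) (\<lambda>\<omega>. 1/2 * B a \<omega> - B b \<omega>) \<omega> + real_cond_exp M (gen_sigma M B n) (\<lambda>\<omega>. 1/2 * B c \<omega>) \<omega>"
      unfolding X_def by (rule S.real_cond_exp_add[OF iab iha(2)])
    have e2: "AE \<omega> in M. real_cond_exp M (gen_sigma M B n) (\<lambda>\<omega>. 1/2 * B a \<omega> - B b \<omega>) \<omega> =
        real_cond_exp M (gen_sigma M B n) (\<lambda>\<omega>. 1/2 * B a \<omega>) \<omega> - real_cond_exp M (gen_sigma M B n) (B b) \<omega>"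
      using S.real_cond_exp_diff[OF iha(1) iBa(2)] by simp
    have e3: "AE \<omega> in M. real_cond_exp M (gen_sigma M B n) (\<lambda>\<omega>. 1/2 * B a \<omega>) \<omega> = 1/2 * real_cond_exp M (gen_sigma M B n) (B a) \<omega>"
      by (rule S.real_cond_exp_cmult[OF iBa(1)])
    have e4: "AE \<omega> in M. real_cond_exp M (gen_sigma M B n) (\<lambda>\<omega>. 1/2 * B c \<omega>) \<omega> = 1/2 * real_cond_exp M (gen_sigma M B n) (B c) \<omega>"
      by (rule S.real_cond_exp_cmult[OF iBa(3)])
    show ?thesis using e1 e2 e3 e4
      by eventually_elim (simp add: mu_cond_def a_def b_def c_def)
  qed
  have Xi_eq: "Xi M B n m k \<theta> \<omega> = real_cond_exp M (gen_sigma M B n) (\<lambda>\<omega>. exp (\<theta> * X \<omega>)) \<omega>" for \<omega>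
    unfolding Xi_def X_def a_def b_def c_def ..
  show ?thesis using AE1 AE2 AE3
  proof eventually_elim
    fix \<omega>
    assume h1: "real_cond_exp M (gen_sigma M B n) (\<lambda>\<omega>. exp (\<theta> * X \<omega>)) \<omega> = exp (\<theta>\<^sup>2 * E2 Y Y / 2) * exp (\<theta> * L \<omega>)"
      and h2: "real_cond_exp M (gen_sigma M B n) X \<omega> = L \<omega>"
      and h3: "real_cond_exp M (gen_sigma M B n) X \<omega> = mu_cond M B n m k \<omega>"
    show "BCE M B H \<delta> \<rho> n \<omega> \<longrightarrow> Xi M B n m k \<theta> \<omega> \<le> exp ((\<rho> * ell H \<delta> (n+m) * \<theta> + \<theta>\<^sup>2 * 2 powr (- 2 * real (n+m) * H)) / 2)"
    proof
      assume "BCE M B H \<delta> \<rho> n \<omega>"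
      then have "\<bar>mu_cond M B n m k \<omega>\<bar> \<le> \<rho> / 2 * ell H \<delta> (n+m)"
        unfolding BCE_def using m k1 k2 by blast
      then have Lb: "L \<omega> \<le> \<rho> / 2 * ell H \<delta> (n+m)" using h2 h3 by simp
      have t1: "\<theta> * L \<omega> \<le> \<theta> * (\<rho> / 2 * ell H \<delta> (n+m))" using Lb th by (simp add: mult_left_mono)
      have t2: "\<theta>\<^sup>2 * E2 Y Y \<le> \<theta>\<^sup>2 * P" using VYP by (simp add: mult_left_mono)
      have "Xi M B n m k \<theta> \<omega> = exp (\<theta> * L \<omega> + \<theta>\<^sup>2 * E2 Y Y / 2)"
        unfolding Xi_eq h1 by (simp add: exp_add[symmetric] add.commute)
      also have "\<dots> \<le> exp ((\<rho> * ell H \<delta> (n+m) * \<theta> + \<theta>\<^sup>2 * P) / 2)"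
        using t1 t2 by (simp add: field_simps)
      finally show "Xi M B n m k \<theta> \<omega> \<le> exp ((\<rho> * ell H \<delta> (n+m) * \<theta> + \<theta>\<^sup>2 * 2 powr (- 2 * real (n+m) * H)) / 2)"
        unfolding P_def .
    qed
  qed
qed

end

theorem lemma12:
  fixes M :: "'a measure" and B :: "real \<Rightarrow> 'a \<Rightarrow> real"
    and H \<delta> \<rho> \<theta> :: real and n m k :: nat
  assumes "fbm_on_unit M H B"
    and "0 < H" and "H < 1" and "0 < \<delta>" and "\<delta> < H" and "0 < \<rho>"
    and "1 \<le> n" and "1 \<le> m" and "1 \<le> k" and "k \<le> 2 ^ (n+m-1)" and "0 < \<theta>"
  shows "AE \<omega> in M. BCE M B H \<delta> \<rho> n \<omega> \<longrightarrow>
           Xi M B n m k \<theta> \<omega> \<le>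
             exp ((\<rho> * ell H \<delta> (n+m) * \<theta> + \<theta>\<^sup>2 * 2 powr (- 2 * real (n+m) * H)) / 2)"
proof -
  interpret fbm_ctx M B H by (rule fbm_ctx.intro) (rule assms(1))
  show ?thesis by (rule main) (use assms in auto)
qed


end
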